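(* Let $(C_\bullet,\partial^C_\bullet)$ be a chain complex in which each $C_n$ is the free abelian group on a finite set $K_n$ (nonempty for only finitely many $n$), and $(G_\bullet,\partial^G_\bullet)$ a chain complex of finite abelian groups, with $\mathrm{hom}^p$, $\mathrm{hom}_p$, $d^p$, $d_p$, $\chi$, $\mathcal H$, $P^\alpha$, $Q_{\hat\beta}$ as in the context. Let $$A_{\hat 0}=\frac{1}{|\mathrm{hom}^{-1}|}\sum_{\alpha\in\mathrm{hom}^{-1}}P^{d^{-1}\alpha},\qquad B^{0}=\frac{1}{|\mathrm{hom}_{1}|}\sum_{\hat\beta\in\mathrm{hom}_{1}}Q_{d_1\hat\beta},$$ and let the ground state subspace $\mathcal H_0$ be the range of the projector $\Pi^0_{\hat 0}=A_{\hat 0}B^0$. Then $\dim\mathcal H_0=|H_0(C,G)|$, where $H_0(C,G)=\ker(d_0)/\mathrm{im}(d_1)$.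
   Context: $\mathrm{hom}^p=\bigoplus_n\mathrm{Hom}(C_n,G_{n-p})$, $\mathrm{hom}_p=\bigoplus_n\mathrm{Hom}(C_n,\hat G_{n-p})$ with $\hat G_m=\mathrm{Hom}(G_m,U(1))$, abelian groups under pointwise addition. The nondegenerate pairing is $\chi_{\hat\rho}(\omega)=\prod_n\prod_{x\in K_n}\hat\rho_n(x)(\omega_n(x))$ for $\hat\rho\in\mathrm{hom}_p,\ \omega\in\mathrm{hom}^p$. $d^p:\mathrm{hom}^p\to\mathrm{hom}^{p+1}$ is $(d^p\omega)_n=\omega_{n-1}\circ\partial^C_n-(-1)^p\,\partial^G_{n-p}\circ\omega_n$, and $d_{p+1}:\mathrm{hom}_{p+1}\to\mathrm{hom}_p$ is the unique homomorphism with $\chi_{d_{p+1}\hat\nu}(\omega)=\chi_{\hat\nu}(d^p\omega)$ for all $\omega\in\mathrm{hom}^p$, $\hat\nu\in\mathrm{hom}_{p+1}$. $\mathcal H$ is the Hilbert space with orthonormal basis $\{|\omega\rangle:\omega\in\mathrm{hom}^0\}$; $P^\alpha|\omega\rangle=|\omega+\alpha\rangle$ ($\alpha\in\mathrm{hom}^0$), $Q_{\hat\beta}|\omega\rangle=\chi_{\hat\beta}(\omega)|\omega\rangle$ ($\hat\beta\in\mathrm{hom}_0$). *)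

theory Defs
  imports "HOL-Library.Function_Algebras" Complex_Main
begin

definition zsmult :: "int \<Rightarrow> 'g::ab_group_add \<Rightarrow> 'g" where
  "zsmult k a = (if 0 \<le> k then ((+) a ^^ nat k) 0 else - (((+) a ^^ nat (- k)) 0))"

definition is_char :: "'g::ab_group_add set \<Rightarrow> ('g \<Rightarrow> complex) \<Rightarrow> bool" where
  "is_char S chi \<longleftrightarrow> (\<forall>a\<in>S. \<forall>b\<in>S. chi (a + b) = chi a * chi b)
     \<and> (\<forall>a\<in>S. cmod (chi a) = 1) \<and> (\<forall>a. a \<notin> S \<longrightarrow> chi a = 1)"

text \<open>hom^p = \<Oplus>_n Hom(C_n, G_{n-p}); a homomorphism on the free group C_n
  is given by its values on the basis K n (extended by 0 off K n).\<close>
definition homU :: "(int \<Rightarrow> 'k set) \<Rightarrow> (int \<Rightarrow> 'g::ab_group_add set) \<Rightarrow> int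
     \<Rightarrow> (int \<Rightarrow> 'k \<Rightarrow> 'g) set" where
  "homU K G p = {\<omega>. \<forall>n x. (x \<in> K n \<longrightarrow> \<omega> n x \<in> G (n - p)) \<and> (x \<notin> K n \<longrightarrow> \<omega> n x = 0)}"

text \<open>hom_p = \<Oplus>_n Hom(C_n, \<hat>G_{n-p}); group operation is pointwise multiplication.\<close>
definition homL :: "(int \<Rightarrow> 'k set) \<Rightarrow> (int \<Rightarrow> 'g::ab_group_add set) \<Rightarrow> int
     \<Rightarrow> (int \<Rightarrow> 'k \<Rightarrow> 'g \<Rightarrow> complex) set" where
  "homL K G p = {\<rho>. \<forall>n x. (x \<in> K n \<longrightarrow> is_char (G (n - p)) (\<rho> n x))
                         \<and> (x \<notin> K n \<longrightarrow> \<rho> n x = (\<lambda>_. 1))}"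

definition mulL :: "(int \<Rightarrow> 'k \<Rightarrow> 'g \<Rightarrow> complex) \<Rightarrow> (int \<Rightarrow> 'k \<Rightarrow> 'g \<Rightarrow> complex)
     \<Rightarrow> (int \<Rightarrow> 'k \<Rightarrow> 'g \<Rightarrow> complex)" where
  "mulL \<rho> \<mu> = (\<lambda>n x a. \<rho> n x a * \<mu> n x a)"

definition oneL :: "int \<Rightarrow> 'k \<Rightarrow> 'g \<Rightarrow> complex" where
  "oneL = (\<lambda>n x a. 1)"

definition pairing :: "(int \<Rightarrow> 'k set) \<Rightarrow> (int \<Rightarrow> 'k \<Rightarrow> 'g \<Rightarrow> complex)
     \<Rightarrow> (int \<Rightarrow> 'k \<Rightarrow> 'g) \<Rightarrow> complex" where
  "pairing K \<rho> \<omega> = (\<Prod>n\<in>{n. K n \<noteq> {}}. \<Prod>x\<in>K n. \<rho> n x (\<omega> n x))"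

text \<open>d^p: (d^p \<omega>)_n = \<omega>_{n-1} \<circ> \<partial>^C_n - (-1)^p \<partial>^G_{n-p} \<circ> \<omega>_n, where
  \<partial>^C_n x = \<Sum>_{y \<in> K(n-1)} c n x y \<cdot> y.\<close>
definition dU :: "(int \<Rightarrow> 'k set) \<Rightarrow> (int \<Rightarrow> 'k \<Rightarrow> 'k \<Rightarrow> int) \<Rightarrow> (int \<Rightarrow> 'g \<Rightarrow> 'g)
     \<Rightarrow> int \<Rightarrow> (int \<Rightarrow> 'k \<Rightarrow> 'g::ab_group_add) \<Rightarrow> (int \<Rightarrow> 'k \<Rightarrow> 'g)" where
  "dU K c dG p \<omega> = (\<lambda>n x. if x \<in> K n then
        (\<Sum>y\<in>K (n - 1). zsmult (c n x y) (\<omega> (n - 1) y))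
          - (if even p then dG (n - p) (\<omega> n x) else - dG (n - p) (\<omega> n x))
      else 0)"

text \<open>d_q: hom_q \<rightarrow> hom_{q-1}, the unique map adjoint to d^{q-1} under the pairing.\<close>
definition dL :: "(int \<Rightarrow> 'k set) \<Rightarrow> (int \<Rightarrow> 'g::ab_group_add set) \<Rightarrow> (int \<Rightarrow> 'k \<Rightarrow> 'k \<Rightarrow> int)
     \<Rightarrow> (int \<Rightarrow> 'g \<Rightarrow> 'g) \<Rightarrow> int \<Rightarrow> (int \<Rightarrow> 'k \<Rightarrow> 'g \<Rightarrow> complex) \<Rightarrow> (int \<Rightarrow> 'k \<Rightarrow> 'g \<Rightarrow> complex)" where
  "dL K G c dG q \<nu> = (THE \<mu>. \<mu> \<in> homL K G (q - 1) \<and>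
      (\<forall>\<omega>\<in>homU K G (q - 1). pairing K \<mu> \<omega> = pairing K \<nu> (dU K c dG (q - 1) \<omega>)))"

text \<open>Hilbert space: complex functions on the basis hom^0 (coefficient vectors).\<close>
definition Hspace :: "(int \<Rightarrow> 'k set) \<Rightarrow> (int \<Rightarrow> 'g::ab_group_add set)
     \<Rightarrow> ((int \<Rightarrow> 'k \<Rightarrow> 'g) \<Rightarrow> complex) set" where
  "Hspace K G = {\<psi>. \<forall>\<omega>. \<omega> \<notin> homU K G 0 \<longrightarrow> \<psi> \<omega> = 0}"

text \<open>P^\<alpha> |\<omega>> = |\<omega>+\<alpha>>, i.e. on coefficients (P^\<alpha> \<psi>)(\<omega>) = \<psi>(\<omega>-\<alpha>).\<close>
definition Pop :: "(int \<Rightarrow> 'k set) \<Rightarrow> (int \<Rightarrow> 'g::ab_group_add set) \<Rightarrow> (int \<Rightarrow> 'k \<Rightarrow> 'g)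
     \<Rightarrow> ((int \<Rightarrow> 'k \<Rightarrow> 'g) \<Rightarrow> complex) \<Rightarrow> ((int \<Rightarrow> 'k \<Rightarrow> 'g) \<Rightarrow> complex)" where
  "Pop K G \<alpha> \<psi> = (\<lambda>\<omega>. if \<omega> \<in> homU K G 0 then \<psi> (\<lambda>n x. \<omega> n x - \<alpha> n x) else 0)"

definition Qop :: "(int \<Rightarrow> 'k set) \<Rightarrow> (int \<Rightarrow> 'k \<Rightarrow> 'g \<Rightarrow> complex)
     \<Rightarrow> ((int \<Rightarrow> 'k \<Rightarrow> 'g) \<Rightarrow> complex) \<Rightarrow> ((int \<Rightarrow> 'k \<Rightarrow> 'g) \<Rightarrow> complex)" where
  "Qop K \<beta> \<psi> = (\<lambda>\<omega>. pairing K \<beta> \<omega> * \<psi> \<omega>)"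

definition Aop :: "(int \<Rightarrow> 'k set) \<Rightarrow> (int \<Rightarrow> 'g::ab_group_add set) \<Rightarrow> (int \<Rightarrow> 'k \<Rightarrow> 'k \<Rightarrow> int)
     \<Rightarrow> (int \<Rightarrow> 'g \<Rightarrow> 'g) \<Rightarrow> ((int \<Rightarrow> 'k \<Rightarrow> 'g) \<Rightarrow> complex) \<Rightarrow> ((int \<Rightarrow> 'k \<Rightarrow> 'g) \<Rightarrow> complex)" where
  "Aop K G c dG \<psi> = (\<lambda>\<omega>. (\<Sum>\<alpha>\<in>homU K G (-1). Pop K G (dU K c dG (-1) \<alpha>) \<psi> \<omega>)
                           / of_nat (card (homU K G (-1))))"

definition Bop :: "(int \<Rightarrow> 'k set) \<Rightarrow> (int \<Rightarrow> 'g::ab_group_add set) \<Rightarrow> (int \<Rightarrow> 'k \<Rightarrow> 'k \<Rightarrow> int)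
     \<Rightarrow> (int \<Rightarrow> 'g \<Rightarrow> 'g) \<Rightarrow> ((int \<Rightarrow> 'k \<Rightarrow> 'g) \<Rightarrow> complex) \<Rightarrow> ((int \<Rightarrow> 'k \<Rightarrow> 'g) \<Rightarrow> complex)" where
  "Bop K G c dG \<psi> = (\<lambda>\<omega>. (\<Sum>\<beta>\<in>homL K G 1. Qop K (dL K G c dG 1 \<beta>) \<psi> \<omega>)
                           / of_nat (card (homL K G 1)))"

definition ground_space :: "(int \<Rightarrow> 'k set) \<Rightarrow> (int \<Rightarrow> 'g::ab_group_add set) \<Rightarrow> (int \<Rightarrow> 'k \<Rightarrow> 'k \<Rightarrow> int)
     \<Rightarrow> (int \<Rightarrow> 'g \<Rightarrow> 'g) \<Rightarrow> ((int \<Rightarrow> 'k \<Rightarrow> 'g) \<Rightarrow> complex) set" where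
  "ground_space K G c dG = (\<lambda>\<psi>. Aop K G c dG (Bop K G c dG \<psi>)) ` Hspace K G"

definition cdim :: "('a \<Rightarrow> complex) set \<Rightarrow> nat" where
  "cdim S = vector_space.dim (\<lambda>(a::complex) f x. a * f x) S"

definition H0 :: "(int \<Rightarrow> 'k set) \<Rightarrow> (int \<Rightarrow> 'g::ab_group_add set) \<Rightarrow> (int \<Rightarrow> 'k \<Rightarrow> 'k \<Rightarrow> int)
     \<Rightarrow> (int \<Rightarrow> 'g \<Rightarrow> 'g) \<Rightarrow> (int \<Rightarrow> 'k \<Rightarrow> 'g \<Rightarrow> complex) set set" where
  "H0 K G c dG = (\<lambda>\<rho>. mulL \<rho> ` (dL K G c dG 1 ` homL K G 1))
       ` {\<rho> \<in> homL K G 0. dL K G c dG 0 \<rho> = oneL}"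

end

theory Submission
  imports Defs "HOL-Library.FuncSet"
begin


lemma zs_0[simp]: "zsmult 0 a = 0" by (simp add: zsmult_def)

lemma zs_Suc: "zsmult (k + 1) (a::'g::ab_group_add) = zsmult k a + a"
proof (cases "k \<ge> 0")
  case True
  then have "nat (k+1) = Suc (nat k)" by simp
  with True show ?thesis by (simp add: zsmult_def add.commute)
next
  case False
  show ?thesis
  proof (cases "k = -1")
    case True then show ?thesis by (simp add: zsmult_def)
  next
    case False
    with \<open>\<not> k \<ge> 0\<close> have "nat (-k) = Suc (nat (-(k+1)))" "\<not> 0 \<le> k+1" by auto
    then show ?thesis using \<open>\<not> k \<ge> 0\<close> by (simp add: zsmult_def algebra_simps)
  qed
qed

lemma zs_pred: "zsmult (k - 1) (a::'g::ab_group_add) = zsmult k a - a"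
  using zs_Suc[of "k - 1" a] by (simp add: algebra_simps)

lemma zs_induct: 
  assumes "P 0" "\<And>k. P k \<Longrightarrow> P (k+1)" "\<And>k. P k \<Longrightarrow> P (k - 1)"
  shows "P (k::int)"
  using int_induct[of P 0] assms by auto

lemma zs_add_left: "zsmult (k + l) (a::'g::ab_group_add) = zsmult k a + zsmult l a"
proof (induct l rule: zs_induct)
  case 1 then show ?case by simp
next
  case (2 l)
  have "zsmult (k + (l+1)) a = zsmult ((k + l) + 1) a" by (simp add: add.assoc)
  also have "\<dots> = zsmult (k+l) a + a" by (rule zs_Suc)
  also have "\<dots> = zsmult k a + zsmult (l+1) a" using 2 by (simp add: zs_Suc add.assoc)
  finally show ?case .
next
  case (3 l)
  have "zsmult (k + (l-1)) a = zsmult ((k + l) - 1) a" by (simp add: algebra_simps)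
  also have "\<dots> = zsmult (k+l) a - a" by (rule zs_pred)
  also have "\<dots> = zsmult k a + zsmult (l-1) a" using 3 by (simp add: zs_pred)
  finally show ?case .
qed

lemma zs_1[simp]: "zsmult 1 a = a" using zs_Suc[of 0 a] by simp

lemma zs_add_right: "zsmult k ((a::'g::ab_group_add) + b) = zsmult k a + zsmult k b"
proof (induct k rule: zs_induct)
  case 1 then show ?case by simp
next
  case (2 k) then show ?case by (simp only: zs_Suc) (simp add: algebra_simps)
next
  case (3 k) then show ?case by (simp only: zs_pred) (simp add: algebra_simps)
qed

lemma zs_zero_right[simp]: "zsmult k (0::'g::ab_group_add) = 0"
  using zs_add_right[of k 0 0] by simp

lemma zs_mult: "zsmult (k * l) (a::'g::ab_group_add) = zsmult k (zsmult l a)"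
proof (induct k rule: zs_induct)
  case 1 then show ?case by simp
next
  case (2 k) then show ?case by (simp add: zs_Suc distrib_right zs_add_left)
next
  case (3 k)
  have "zsmult ((k - 1) * l) a = zsmult (k * l + (- l)) a" by (simp add: algebra_simps)
  also have "\<dots> = zsmult (k*l) a + zsmult (-l) a" by (rule zs_add_left)
  also have "zsmult (-l) a = - zsmult l a" using zs_add_left[of l "-l" a] by (simp add: add.commute eq_neg_iff_add_eq_0)
  finally show ?case using 3 by (simp only: zs_pred) simp
qed

lemma zs_sum_left: "zsmult (\<Sum>i\<in>I. f i) (a::'g::ab_group_add) = (\<Sum>i\<in>I. zsmult (f i) a)"
  by (induct I rule: infinite_finite_induct) (auto simp: zs_add_left)

lemma zs_sum_right: "zsmult k (\<Sum>i\<in>I. f i) = (\<Sum>i\<in>I. zsmult k (f i::'g::ab_group_add))"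
  by (induct I rule: infinite_finite_induct) (auto simp: zs_add_right)

lemma zs_closed:
  assumes "0 \<in> S" "\<And>a b. a \<in> S \<Longrightarrow> b \<in> S \<Longrightarrow> a + b \<in> S" "\<And>a. a \<in> S \<Longrightarrow> - a \<in> S" "a \<in> S"
  shows "zsmult k (a::'g::ab_group_add) \<in> S"
proof (induct k rule: zs_induct)
  case 1 then show ?case using assms by simp
next
  case (2 k) then show ?case using assms by (simp only: zs_Suc)
next
  case (3 k) then show ?case using assms unfolding zs_pred by (simp only: diff_conv_add_uminus)
qed

lemma zs_hom:
  assumes "0 \<in> S" "\<And>a b. a \<in> S \<Longrightarrow> b \<in> S \<Longrightarrow> a + b \<in> S" "\<And>a. a \<in> S \<Longrightarrow> - a \<in> S" "a \<in> S"
    and "\<And>a b. a \<in> S \<Longrightarrow> b \<in> S \<Longrightarrow> f (a + b) = f a + f b"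
  shows "f (zsmult k (a::'g::ab_group_add)) = zsmult k ((f a)::'h::ab_group_add)"
proof -
  have f0: "f 0 = 0" using assms(5)[of 0 0] assms(1) by simp
  have fneg: "f (- x) = - f x" if "x \<in> S" for x
    using assms(5)[of x "-x"] assms(3) that f0 by (simp add: add.commute eq_neg_iff_add_eq_0)
  show ?thesis
  proof (induct k rule: zs_induct)
    case 1 then show ?case using f0 by simp
  next
    case (2 k) then show ?case using assms zs_closed[OF assms(1-4)] by (simp only: zs_Suc)
  next
    case (3 k) then show ?case using assms zs_closed[OF assms(1-4)] fneg
      unfolding zs_pred by (simp only: diff_conv_add_uminus)
  qed
qed


locale cgrp =
  fixes M :: "'a set" and op :: "'a \<Rightarrow> 'a \<Rightarrow> 'a" and iv :: "'a \<Rightarrow> 'a" and e :: 'a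
  assumes cl: "x \<in> M \<Longrightarrow> y \<in> M \<Longrightarrow> op x y \<in> M"
    and iv_cl: "x \<in> M \<Longrightarrow> iv x \<in> M" and e_cl: "e \<in> M"
    and assoc: "x \<in> M \<Longrightarrow> y \<in> M \<Longrightarrow> z \<in> M \<Longrightarrow> op (op x y) z = op x (op y z)"
    and comm: "x \<in> M \<Longrightarrow> y \<in> M \<Longrightarrow> op x y = op y x"
    and lid: "x \<in> M \<Longrightarrow> op e x = x"
    and linv: "x \<in> M \<Longrightarrow> op (iv x) x = e"
begin

definition sub :: "'a set \<Rightarrow> bool" where
  "sub H \<longleftrightarrow> H \<subseteq> M \<and> e \<in> H \<and> (\<forall>x\<in>H. \<forall>y\<in>H. op x y \<in> H) \<and> (\<forall>x\<in>H. iv x \<in> H)"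

lemma rid: "x \<in> M \<Longrightarrow> op x e = x" using comm[of x e] lid e_cl by simp
lemma rinv: "x \<in> M \<Longrightarrow> op x (iv x) = e" using comm[of x "iv x"] linv iv_cl by simp

lemma cancel: assumes "x \<in> M" "y \<in> M" "z \<in> M" "op x y = op x z" shows "y = z"
proof -
  have "op (iv x) (op x y) = op (iv x) (op x z)" using assms by simp
  then show ?thesis using assms assoc[of "iv x" x y] assoc[of "iv x" x z] iv_cl linv lid by simp
qed

lemma coset_card:
  assumes "finite N" "sub H" "sub N" "H \<subseteq> N"
  shows "card ((\<lambda>x. op x ` H) ` N) * card H = card N"
proof -
  have HM: "H \<subseteq> M" and NM: "N \<subseteq> M" using assms unfolding sub_def by auto
  have U: "\<Union> ((\<lambda>x. op x ` H) ` N) = N"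
  proof
    show "\<Union> ((\<lambda>x. op x ` H) ` N) \<subseteq> N" using assms unfolding sub_def by blast
    show "N \<subseteq> \<Union> ((\<lambda>x. op x ` H) ` N)"
    proof
      fix x assume "x \<in> N"
      then have "x = op x e" using rid NM by auto
      then show "x \<in> \<Union> ((\<lambda>x. op x ` H) ` N)" using \<open>x \<in> N\<close> assms(2) unfolding sub_def by blast
    qed
  qed
  have sub1: "op x ` H \<subseteq> op y ` H" if xy: "x \<in> N" "y \<in> N" "(op x ` H) \<inter> (op y ` H) \<noteq> {}" for x y
  proof -
    obtain h1 h2 where h: "h1 \<in> H" "h2 \<in> H" "op x h1 = op y h2" using xy by blast
    have xM: "x \<in> M" "y \<in> M" "h1 \<in> M" "h2 \<in> M" "iv h1 \<in> M" using h xy NM HM iv_cl by auto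
    have "x = op (op x h1) (iv h1)" using xM assoc[of x h1 "iv h1"] rinv rid by simp
    also have "\<dots> = op y (op h2 (iv h1))" using h xM assoc by simp
    finally have xe: "x = op y (op h2 (iv h1))" .
    show ?thesis
    proof
      fix z assume "z \<in> op x ` H"
      then obtain h where "h \<in> H" "z = op x h" by blast
      then have "z = op y (op (op h2 (iv h1)) h)" using xe xM HM assoc cl by (metis subsetD)
      moreover have "op (op h2 (iv h1)) h \<in> H" using assms(2) h \<open>h \<in> H\<close> unfolding sub_def by blast
      ultimately show "z \<in> op y ` H" by blast
    qed
  qed
  have "card H * card ((\<lambda>x. op x ` H) ` N) = card (\<Union> ((\<lambda>x. op x ` H) ` N))"
  proof (rule card_partition)
    show "finite ((\<lambda>x. op x ` H) ` N)" using assms by simp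
    show "finite (\<Union> ((\<lambda>x. op x ` H) ` N))" using U assms by simp
    show "\<And>c. c \<in> (\<lambda>x. op x ` H) ` N \<Longrightarrow> card c = card H"
    proof -
      fix c assume "c \<in> (\<lambda>x. op x ` H) ` N"
      then obtain x where x: "x \<in> N" "c = op x ` H" by blast
      have "inj_on (op x) H" using cancel x NM HM by (meson inj_onI subsetD)
      then show "card c = card H" using x by (simp add: card_image)
    qed
    show "\<And>c1 c2. c1 \<in> (\<lambda>x. op x ` H) ` N \<Longrightarrow> c2 \<in> (\<lambda>x. op x ` H) ` N \<Longrightarrow> c1 \<noteq> c2 \<Longrightarrow> c1 \<inter> c2 = {}"
    proof -
      fix c1 c2 assume c: "c1 \<in> (\<lambda>x. op x ` H) ` N" "c2 \<in> (\<lambda>x. op x ` H) ` N" "c1 \<noteq> c2"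
      then obtain x y where xy: "x \<in> N" "y \<in> N" "c1 = op x ` H" "c2 = op y ` H" by blast
      show "c1 \<inter> c2 = {}"
      proof (rule ccontr)
        assume ne: "c1 \<inter> c2 \<noteq> {}"
        then have "c1 \<subseteq> c2" using sub1[of x y] xy by simp
        moreover have "c2 \<subseteq> c1" using sub1[of y x] xy ne by (simp add: Int_commute)
        ultimately show False using c(3) by simp
      qed
    qed
  qed
  then show ?thesis using U by (simp add: mult.commute)
qed

lemma kernel_card:
  assumes M': "cgrp M' op' iv' e'"
    and "finite N" "sub N" "f ` N \<subseteq> M'"
    and hom: "\<And>x y. x \<in> N \<Longrightarrow> y \<in> N \<Longrightarrow> f (op x y) = op' (f x) (f y)"
  shows "card N = card (f ` N) * card {x\<in>N. f x = e'}"
proof -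
  interpret B: cgrp M' op' iv' e' by (rule M')
  have NM: "N \<subseteq> M" and eN: "e \<in> N" and Ncl: "\<And>x y. x\<in>N \<Longrightarrow> y\<in>N \<Longrightarrow> op x y \<in> N"
    and Niv: "\<And>x. x \<in> N \<Longrightarrow> iv x \<in> N" using assms unfolding sub_def by auto
  have fe: "f e = e'"
  proof -
    have feM: "f e \<in> M'" using assms(4) eN by blast
    have "f e = f (op e e)" using lid[OF e_cl] by simp
    also have "\<dots> = op' (f e) (f e)" by (rule hom[OF eN eN])
    finally have "op' (f e) (f e) = op' (f e) e'" using B.rid[OF feM] by simp
    then show ?thesis using B.cancel assms(4) eN B.e_cl by blast
  qed
  define ker where "ker = {x\<in>N. f x = e'}"
  have fib: "{x\<in>N. f x = f x0} = op x0 ` ker" if "x0 \<in> N" for x0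
  proof
    show "op x0 ` ker \<subseteq> {x\<in>N. f x = f x0}"
    proof
      fix z assume "z \<in> op x0 ` ker"
      then obtain k where k: "k \<in> N" "f k = e'" "z = op x0 k" unfolding ker_def by blast
      have "f z = op' (f x0) e'" using hom[of x0 k] k that by simp
      also have "\<dots> = f x0" using B.rid[of "f x0"] assms(4) that by blast
      finally show "z \<in> {x\<in>N. f x = f x0}" using k that Ncl by simp
    qed
    show "{x\<in>N. f x = f x0} \<subseteq> op x0 ` ker"
    proof
      fix x assume x: "x \<in> {x\<in>N. f x = f x0}"
      define k where "k = op (iv x0) x"
      have "k \<in> N" using x that Niv Ncl k_def by auto
      have "f k = op' (f (iv x0)) (f x0)" using hom[of "iv x0" x] x that Niv k_def by auto
      also have "\<dots> = f (op (iv x0) x0)" using hom[of "iv x0" x0] that Niv by auto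
      also have "\<dots> = e'" using linv fe that NM by auto
      finally have "k \<in> ker" using \<open>k \<in> N\<close> ker_def by auto
      moreover have "op x0 k = x"
      proof -
        have "x0 \<in> M" "x \<in> M" "iv x0 \<in> M" using that x NM iv_cl by auto
        then have "op x0 k = op (op x0 (iv x0)) x" unfolding k_def using assoc by simp
        then show ?thesis using rinv lid \<open>x0 \<in> M\<close> \<open>x \<in> M\<close> by simp
      qed
      ultimately show "x \<in> op x0 ` ker" by blast
    qed
  qed
  have cardfib: "card {x\<in>N. f x = y} = card ker" if yN: "y \<in> f ` N" for y
  proof -
    obtain x0 where "x0 \<in> N" "y = f x0" using yN by blast
    moreover have "inj_on (op x0) ker"
    proof (rule inj_onI)
      fix a b assume "a \<in> ker" "b \<in> ker" "op x0 a = op x0 b"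
      then show "a = b" using cancel[of x0 a b] \<open>x0 \<in> N\<close> NM unfolding ker_def by blast
    qed
    ultimately show ?thesis using fib by (simp add: card_image)
  qed
  have NU: "N = (\<Union>y\<in>f ` N. {x\<in>N. f x = y})" by auto
  have "card (\<Union>y\<in>f ` N. {x\<in>N. f x = y}) = (\<Sum>y\<in>f ` N. card {x\<in>N. f x = y})"
    by (rule card_UN_disjoint) (use assms(2) in auto)
  then have "card N = (\<Sum>y\<in>f ` N. card {x\<in>N. f x = y})" using NU by simp
  also have "\<dots> = card (f ` N) * card ker" using cardfib by simp
  finally show ?thesis unfolding ker_def .
qed

end

lemma cgrp_add: "cgrp UNIV (+) uminus (0::'a::ab_group_add)"
  by unfold_locales (auto simp: algebra_simps)


definition asub :: "'a::ab_group_add set \<Rightarrow> bool" where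
  "asub S \<longleftrightarrow> 0 \<in> S \<and> (\<forall>a\<in>S. \<forall>b\<in>S. a + b \<in> S) \<and> (\<forall>a\<in>S. - a \<in> S)"

lemma asub_sub: "asub S \<longleftrightarrow> cgrp.sub UNIV (+) uminus 0 S"
  unfolding asub_def cgrp.sub_def[OF cgrp_add] by blast

lemma asubD: assumes "asub S" shows "0 \<in> S" "a \<in> S \<Longrightarrow> b \<in> S \<Longrightarrow> a + b \<in> S" "a \<in> S \<Longrightarrow> - a \<in> S"
  "a \<in> S \<Longrightarrow> b \<in> S \<Longrightarrow> a - b \<in> S"
  using assms unfolding asub_def diff_conv_add_uminus by blast+

lemma asub_zs: "asub S \<Longrightarrow> a \<in> S \<Longrightarrow> zsmult k a \<in> S"
  by (rule zs_closed) (auto simp: asub_def)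

definition chars :: "'a::ab_group_add set \<Rightarrow> 'a set \<Rightarrow> ('a \<Rightarrow> complex) set" where
  "chars S T = {\<chi>. is_char S \<chi> \<and> (\<forall>t\<in>T. \<chi> t = 1)}"

definition zn :: "nat \<Rightarrow> 'a::ab_group_add \<Rightarrow> 'a" where "zn k a = zsmult (int k) a"

lemma zn_0[simp]: "zn 0 a = 0" and zn_1[simp]: "zn 1 a = a" by (simp_all add: zn_def)
lemma zn_Suc0[simp]: "zn (Suc 0) a = a" by (simp add: zn_def)
lemma zn_add: "zn (i + j) a = zn i a + zn j a" by (simp add: zn_def zs_add_left)
lemma zn_mult: "zn (i * j) a = zn i (zn j a)" by (simp add: zn_def zs_mult)
lemma zn_Suc: "zn (Suc k) a = zn k a + a" using zn_add[of k 1 a] zn_1[of a] by (simp del: zn_1)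
lemma asub_zn: "asub S \<Longrightarrow> a \<in> S \<Longrightarrow> zn k a \<in> S" by (simp add: zn_def asub_zs)
lemma zn_zero[simp]: "zn k 0 = 0" by (simp add: zn_def)

context
  fixes S :: "'a::ab_group_add set" and \<chi> :: "'a \<Rightarrow> complex"
  assumes aS: "asub S" and ch: "is_char S \<chi>"
begin

lemma ch_mult: "a \<in> S \<Longrightarrow> b \<in> S \<Longrightarrow> \<chi> (a + b) = \<chi> a * \<chi> b"
  using ch unfolding is_char_def by blast

lemma ch_norm: "a \<in> S \<Longrightarrow> cmod (\<chi> a) = 1"
  using ch unfolding is_char_def by blast

lemma ch_out: "a \<notin> S \<Longrightarrow> \<chi> a = 1"
  using ch unfolding is_char_def by blast

lemma ch_nz: "\<chi> a \<noteq> 0"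
proof (cases "a \<in> S")
  case True then show ?thesis using ch_norm[of a] by auto
next
  case False then show ?thesis using ch_out[of a] by simp
qed

lemma ch_0: "\<chi> 0 = 1"
proof -
  have "\<chi> 0 = \<chi> 0 * \<chi> 0" using ch_mult[of 0 0] asubD(1)[OF aS] by simp
  then have "\<chi> 0 * 1 = \<chi> 0 * \<chi> 0" by simp
  then show ?thesis using ch_nz[of 0] mult_left_cancel by metis
qed

lemma ch_zn: "a \<in> S \<Longrightarrow> \<chi> (zn k a) = \<chi> a ^ k"
proof (induct k)
  case 0 then show ?case by (simp add: ch_0)
next
  case (Suc k)
  have "\<chi> (zn (Suc k) a) = \<chi> (zn k a + a)" by (simp only: zn_Suc)
  also have "\<dots> = \<chi> (zn k a) * \<chi> a" using ch_mult asub_zn[OF aS Suc.prems] Suc.prems by blast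
  finally show ?case using Suc by simp
qed

lemma ch_cnj: "\<chi> a * cnj (\<chi> a) = 1"
proof (cases "a \<in> S")
  case True
  then have "cmod (\<chi> a) = 1" by (rule ch_norm)
  then show ?thesis using complex_norm_square[of "\<chi> a"] by simp
next
  case False then show ?thesis using ch_out by simp
qed

lemma ch_neg: "a \<in> S \<Longrightarrow> \<chi> (- a) = cnj (\<chi> a)"
proof -
  assume a: "a \<in> S"
  have "\<chi> (-a) * \<chi> a = 1" using ch_mult[of "-a" a] a asubD[OF aS] ch_0 by simp
  have "\<chi> (-a) = \<chi> (-a) * (\<chi> a * cnj (\<chi> a))" using ch_cnj[of a] by simp
  also have "\<dots> = (\<chi> (-a) * \<chi> a) * cnj (\<chi> a)" by (rule mult.assoc[symmetric])
  finally show ?thesis using \<open>\<chi> (-a) * \<chi> a = 1\<close> by simp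
qed

end


definition ordb :: "'a::ab_group_add set \<Rightarrow> 'a \<Rightarrow> nat" where
  "ordb U b = (LEAST k. 0 < k \<and> zn k b \<in> U)"

definition gen :: "'a::ab_group_add set \<Rightarrow> 'a \<Rightarrow> 'a set" where
  "gen U b = {u + zn k b | u k. u \<in> U}"

context
  fixes S U :: "'a::ab_group_add set" and b :: 'a
  assumes fS: "finite S" and aS: "asub S" and aU: "asub U" and US: "U \<subseteq> S" and bS: "b \<in> S"
begin

lemma ex_ord: "\<exists>k>0. zn k b \<in> U"
proof -
  have "range (\<lambda>k. zn k b) \<subseteq> S" using asub_zn[OF aS bS] by blast
  then have "finite (range (\<lambda>k. zn k b))" using fS finite_subset by blast
  then have "\<not> inj (\<lambda>k::nat. zn k b)" using finite_imageD infinite_UNIV_nat by blast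
  then obtain i j where ij: "i \<noteq> j" "zn i b = zn j b" unfolding inj_def by blast
  have "\<exists>i j. i < j \<and> zn i b = zn j b"
  proof (cases "i < j")
    case True then show ?thesis using ij by blast
  next
    case False then have "j < i" using ij(1) by simp
    then show ?thesis using ij(2) by metis
  qed
  then obtain i j where ij2: "i < j" "zn i b = zn j b" by blast
  have "zn j b = zn i b + zn (j - i) b" using zn_add[of i "j - i" b] ij2(1) by simp
  then have "zn (j - i) b = 0" using ij2(2) by simp
  then show ?thesis using ij2(1) asubD(1)[OF aU] by (intro exI[of _ "j - i"]) simp
qed

lemma m_pos: "0 < ordb U b" and m_in: "zn (ordb U b) b \<in> U"
  using LeastI_ex[OF ex_ord] unfolding ordb_def by auto

lemma m_min: "0 < k \<Longrightarrow> k < ordb U b \<Longrightarrow> zn k b \<notin> U"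
  unfolding ordb_def using not_less_Least by blast

lemma zn_mU: "zn (q * ordb U b) b \<in> U"
  using asub_zn[OF aU m_in] zn_mult[of q "ordb U b" b] by simp

lemma m_dvd: assumes "zn j b \<in> U" shows "ordb U b dvd j"
proof -
  let ?m = "ordb U b"
  have j: "j = (j div ?m) * ?m + j mod ?m" by (rule div_mult_mod_eq[symmetric])
  have "zn j b = zn ((j div ?m) * ?m) b + zn (j mod ?m) b" using zn_add j by metis
  then have "zn (j mod ?m) b = zn j b - zn ((j div ?m) * ?m) b" by (simp add: algebra_simps)
  then have "zn (j mod ?m) b \<in> U" using asubD(4)[OF aU assms zn_mU] by simp
  moreover have "j mod ?m < ?m" using m_pos by simp
  ultimately have "j mod ?m = 0" using m_min by (meson neq0_conv)
  then show ?thesis by (simp add: dvd_eq_mod_eq_0)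
qed

lemma gen_red: assumes "x \<in> gen U b" shows "\<exists>u\<in>U. \<exists>k<ordb U b. x = u + zn k b"
proof -
  let ?m = "ordb U b"
  obtain u k where uk: "u \<in> U" "x = u + zn k b" using assms unfolding gen_def by blast
  have "zn k b = zn ((k div ?m) * ?m) b + zn (k mod ?m) b" using zn_add div_mult_mod_eq by metis
  then have "x = (u + zn ((k div ?m) * ?m) b) + zn (k mod ?m) b" using uk by (simp add: add.assoc)
  moreover have "u + zn ((k div ?m) * ?m) b \<in> U" using asubD(2)[OF aU uk(1) zn_mU] .
  moreover have "k mod ?m < ?m" using m_pos by simp
  ultimately show ?thesis by blast
qed

lemma gen_uniq_aux:
  assumes "u \<in> U" "u' \<in> U" "k \<le> k'" "k' < ordb U b" "u + zn k b = u' + zn k' b"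
  shows "k = k' \<and> u = u'"
proof -
  have "zn k' b = zn k b + zn (k' - k) b" using zn_add[of k "k' - k" b] assms(3) by simp
  then have "u - u' = zn (k' - k) b" using assms(5) by (simp add: algebra_simps)
  then have "zn (k' - k) b \<in> U" using asubD(4)[OF aU assms(1,2)] by simp
  then have "k' - k = 0" using m_min[of "k' - k"] assms(3,4) by linarith
  then have "k = k'" using assms(3) by simp
  then show ?thesis using assms(5) by simp
qed

lemma gen_uniq:
  assumes "u \<in> U" "u' \<in> U" "k < ordb U b" "k' < ordb U b" "u + zn k b = u' + zn k' b"
  shows "k = k' \<and> u = u'"
proof (cases "k \<le> k'")
  case True then show ?thesis using gen_uniq_aux assms by blast
next
  case False then show ?thesis using gen_uniq_aux[of u' u k' k] assms by simp
qed

lemma gen_asub: "asub (gen U b)"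
proof -
  let ?m = "ordb U b"
  have "0 \<in> gen U b" unfolding gen_def using asubD(1)[OF aU] by (intro CollectI exI[of _ 0]) simp
  moreover have "x + y \<in> gen U b" if xy: "x \<in> gen U b" "y \<in> gen U b" for x y
  proof -
    obtain u k u' k' where "u \<in> U" "u' \<in> U" "x = u + zn k b" "y = u' + zn k' b"
      using xy unfolding gen_def by blast
    note h = this
    have "u + u' \<in> U" using asubD(2)[OF aU] h by blast
    moreover have "x + y = (u + u') + zn (k + k') b"
      using h by (simp only: zn_add) (simp add: algebra_simps)
    ultimately show ?thesis unfolding gen_def by blast
  qed
  moreover have "- x \<in> gen U b" if xg: "x \<in> gen U b" for x
  proof -
    obtain u k where uk: "u \<in> U" "x = u + zn k b" using xg unfolding gen_def by blast
    have e: "zn (k * ?m) b = zn ((?m - 1) * k) b + zn k b"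
      using zn_add[of "(?m - 1) * k" k b] m_pos by (simp add: algebra_simps mult.commute)
    have "- x = (- u - zn (k * ?m) b) + zn ((?m - 1) * k) b"
      using uk e by (simp add: algebra_simps)
    moreover have "- u - zn (k * ?m) b \<in> U" using asubD(3,4)[OF aU] uk zn_mU by blast
    ultimately show ?thesis unfolding gen_def by blast
  qed
  ultimately show ?thesis unfolding asub_def by blast
qed

lemma U_gen: "U \<subseteq> gen U b"
proof
  fix x assume "x \<in> U"
  moreover have "x = x + zn 0 b" by simp
  ultimately show "x \<in> gen U b" unfolding gen_def by blast
qed

lemma b_gen: "b \<in> gen U b"
proof -
  have "b = 0 + zn 1 b" by simp
  then show ?thesis unfolding gen_def using asubD(1)[OF aU] by blast
qed

lemma gen_S: "gen U b \<subseteq> S"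
  unfolding gen_def using US asubD(2)[OF aS] asub_zn[OF aS bS] by blast

lemma gen_card: "card (gen U b) = ordb U b * card U"
proof -
  let ?m = "ordb U b"
  have "bij_betw (\<lambda>(u,k). u + zn k b) (U \<times> {..<?m}) (gen U b)"
  proof (rule bij_betw_imageI)
    show "inj_on (\<lambda>(u,k). u + zn k b) (U \<times> {..<?m})"
      using gen_uniq by (auto simp: inj_on_def)
    show "(\<lambda>(u,k). u + zn k b) ` (U \<times> {..<?m}) = gen U b"
    proof
      show "(\<lambda>(u,k). u + zn k b) ` (U \<times> {..<?m}) \<subseteq> gen U b" unfolding gen_def by auto
      show "gen U b \<subseteq> (\<lambda>(u,k). u + zn k b) ` (U \<times> {..<?m})"
      proof
        fix x assume "x \<in> gen U b"
        then obtain u k where "u \<in> U" "k < ?m" "x = u + zn k b" using gen_red by blast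
        then show "x \<in> (\<lambda>(u,k). u + zn k b) ` (U \<times> {..<?m})" by force
      qed
    qed
  qed
  then have "card (gen U b) = card (U \<times> {..<?m})" by (simp add: bij_betw_same_card)
  then show ?thesis by (simp add: card_cartesian_product)
qed

end


definition Rst :: "'a set \<Rightarrow> ('a \<Rightarrow> complex) \<Rightarrow> ('a \<Rightarrow> complex)" where
  "Rst U \<chi> = (\<lambda>x. if x \<in> U then \<chi> x else 1)"

context
  fixes S U T :: "'a::ab_group_add set" and b :: 'a
  assumes fS: "finite S" and aS: "asub S" and aU: "asub U" and US: "U \<subseteq> S" and bS: "b \<in> S"
    and TU: "T \<subseteq> U"
begin

lemma aG: "asub (gen U b)" by (rule gen_asub[OF fS aS aU US bS])

lemma ext_formula:
  assumes "\<chi> \<in> chars (gen U b) T" "u \<in> U"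
  shows "\<chi> (u + zn k b) = \<chi> u * \<chi> b ^ k"
proof -
  have ch: "is_char (gen U b) \<chi>" using assms unfolding chars_def by blast
  have bG: "b \<in> gen U b" by (rule b_gen[OF fS aS aU US bS])
  have uG: "u \<in> gen U b" using U_gen[OF fS aS aU US bS] assms(2) by blast
  have "\<chi> (u + zn k b) = \<chi> u * \<chi> (zn k b)"
    using ch_mult[OF aG ch uG asub_zn[OF aG bG]] .
  also have "\<chi> (zn k b) = \<chi> b ^ k" using ch_zn[OF aG ch bG] .
  finally show ?thesis .
qed

lemma Rst_in:
  assumes "\<chi> \<in> chars (gen U b) T"
  shows "Rst U \<chi> \<in> chars U T"
proof -
  have ch: "is_char (gen U b) \<chi>" and tr: "\<forall>t\<in>T. \<chi> t = 1" using assms unfolding chars_def by blast+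
  have UG: "U \<subseteq> gen U b" by (rule U_gen[OF fS aS aU US bS])
  have "is_char U (Rst U \<chi>)"
    unfolding is_char_def Rst_def
  proof (intro conjI ballI allI impI)
    fix x y assume "x \<in> U" "y \<in> U"
    then show "(if x + y \<in> U then \<chi> (x + y) else 1) = (if x \<in> U then \<chi> x else 1) * (if y \<in> U then \<chi> y else 1)"
    proof -
      have "x \<in> gen U b" "y \<in> gen U b" "x + y \<in> U" using \<open>x \<in> U\<close> \<open>y \<in> U\<close> UG asubD(2)[OF aU] by blast+
      then show ?thesis using ch_mult[OF aG ch] \<open>x \<in> U\<close> \<open>y \<in> U\<close> by simp
    qed
  next
    fix x assume "x \<in> U" then show "cmod (if x \<in> U then \<chi> x else 1) = 1" using ch_norm[OF aG ch] UG by auto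
  next
    fix x assume "x \<notin> U" then show "(if x \<in> U then \<chi> x else 1) = 1" by simp
  qed
  moreover have "\<forall>t\<in>T. Rst U \<chi> t = 1" using tr TU unfolding Rst_def by auto
  ultimately show ?thesis unfolding chars_def by blast
qed

lemma root_eq:
  assumes "\<chi> \<in> chars (gen U b) T"
  shows "\<chi> b ^ ordb U b = Rst U \<chi> (zn (ordb U b) b)"
proof -
  have ch: "is_char (gen U b) \<chi>" using assms unfolding chars_def by blast
  have bG: "b \<in> gen U b" by (rule b_gen[OF fS aS aU US bS])
  show ?thesis using ch_zn[OF aG ch bG] m_in[OF fS aS aU US bS] unfolding Rst_def by simp
qed

lemma wd_aux:
  assumes psi: "\<psi> \<in> chars U T" and z: "z ^ ordb U b = \<psi> (zn (ordb U b) b)"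
    and "u \<in> U" "u' \<in> U" "k \<le> k'" "u + zn k b = u' + zn k' b"
  shows "\<psi> u * z ^ k = \<psi> u' * z ^ k'"
proof -
  let ?m = "ordb U b"
  have ch: "is_char U \<psi>" using psi unfolding chars_def by blast
  have "zn k' b = zn k b + zn (k' - k) b" using zn_add[of k "k' - k" b] assms(5) by simp
  then have e: "u = u' + zn (k' - k) b" using assms(6) by (simp add: algebra_simps)
  then have "zn (k' - k) b = u - u'" by simp
  then have "zn (k' - k) b \<in> U" using asubD(4)[OF aU assms(3,4)] by simp
  then have "?m dvd (k' - k)" by (rule m_dvd[OF fS aS aU US bS])
  then obtain q where q: "k' - k = ?m * q" by blast
  have "zn (k' - k) b = zn q (zn ?m b)" using q zn_mult[of q ?m b] by (simp add: mult.commute)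
  then have "\<psi> u = \<psi> u' * \<psi> (zn q (zn ?m b))"
    using e ch_mult[OF aU ch assms(4)] asub_zn[OF aU m_in[OF fS aS aU US bS]] by simp
  also have "\<psi> (zn q (zn ?m b)) = z ^ (?m * q)"
    using ch_zn[OF aU ch m_in[OF fS aS aU US bS]] z by (simp add: power_mult)
  finally have "\<psi> u * z ^ k = \<psi> u' * z ^ (?m * q + k)" by (simp add: power_add)
  also have "?m * q + k = k'" using q assms(5) by simp
  finally show ?thesis .
qed

lemma wd:
  assumes psi: "\<psi> \<in> chars U T" and z: "z ^ ordb U b = \<psi> (zn (ordb U b) b)"
    and "u \<in> U" "u' \<in> U" "u + zn k b = u' + zn k' b"
  shows "\<psi> u * z ^ k = \<psi> u' * z ^ k'"
proof (cases "k \<le> k'")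
  case True then show ?thesis using wd_aux[OF psi z] assms by blast
next
  case False then show ?thesis using wd_aux[OF psi z, of u' u k' k] assms by simp
qed

lemma construct:
  assumes psi: "\<psi> \<in> chars U T" and z: "z ^ ordb U b = \<psi> (zn (ordb U b) b)"
  shows "\<exists>\<chi>\<in>chars (gen U b) T. Rst U \<chi> = \<psi> \<and> \<chi> b = z"
proof -
  let ?m = "ordb U b"
  have ch: "is_char U \<psi>" and tr: "\<forall>t\<in>T. \<psi> t = 1" using psi unfolding chars_def by blast+
  define \<chi> where "\<chi> x = (if x \<in> gen U b then (SOME v. \<exists>u\<in>U. \<exists>k. x = u + zn k b \<and> v = \<psi> u * z ^ k) else 1)" for x
  have form: "\<chi> (u0 + zn k0 b) = \<psi> u0 * z ^ k0" if u0U: "u0 \<in> U" for u0 k0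
  proof -
    define P where "P v = (\<exists>u\<in>U. \<exists>k. u0 + zn k0 b = u + zn k b \<and> v = \<psi> u * z ^ k)" for v
    have inG: "u0 + zn k0 b \<in> gen U b" using u0U unfolding gen_def by blast
    have e: "\<chi> (u0 + zn k0 b) = (SOME v. P v)" unfolding \<chi>_def P_def using inG by simp
    have "P (\<psi> u0 * z ^ k0)" unfolding P_def using u0U by blast
    then have "P (SOME v. P v)" by (rule someI)
    then obtain u' k' where "u' \<in> U" "u0 + zn k0 b = u' + zn k' b"
       "(SOME v. P v) = \<psi> u' * z ^ k'" unfolding P_def by blast
    then show ?thesis using wd[OF psi z u0U \<open>u' \<in> U\<close>] e by simp
  qed
  have nz: "cmod z = 1"
  proof -
    have "cmod z ^ ?m = cmod (\<psi> (zn ?m b))" using z by (metis norm_power)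
    also have "\<dots> = 1" using ch_norm[OF aU ch m_in[OF fS aS aU US bS]] .
    finally have "cmod z ^ ?m = 1 ^ ?m" by simp
    then show ?thesis using power_eq_iff_eq_base[of ?m "cmod z" 1] m_pos[OF fS aS aU US bS] by simp
  qed
  have isc: "is_char (gen U b) \<chi>"
    unfolding is_char_def
  proof (intro conjI ballI allI impI)
    fix x y assume "x \<in> gen U b" "y \<in> gen U b"
    then obtain u k u' k' where h: "u \<in> U" "u' \<in> U" "x = u + zn k b" "y = u' + zn k' b"
      unfolding gen_def by blast
    have "x + y = (u + u') + zn (k + k') b" using h by (simp only: zn_add) (simp add: algebra_simps)
    moreover have "u + u' \<in> U" using asubD(2)[OF aU] h by blast
    ultimately have "\<chi> (x + y) = \<psi> (u + u') * z ^ (k + k')" using form by simp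
    also have "\<dots> = (\<psi> u * z ^ k) * (\<psi> u' * z ^ k')" using ch_mult[OF aU ch h(1,2)] by (simp add: power_add)
    finally show "\<chi> (x + y) = \<chi> x * \<chi> y" using form h by simp
  next
    fix x assume "x \<in> gen U b"
    then obtain u k where h: "u \<in> U" "x = u + zn k b" unfolding gen_def by blast
    then show "cmod (\<chi> x) = 1" using form ch_norm[OF aU ch h(1)] nz by (simp add: norm_mult norm_power)
  next
    fix x assume "x \<notin> gen U b" then show "\<chi> x = 1" unfolding \<chi>_def by simp
  qed
  have "\<forall>t\<in>T. \<chi> t = 1"
  proof
    fix t assume "t \<in> T"
    then have "t \<in> U" using TU by blast
    then have "\<chi> (t + zn 0 b) = \<psi> t" using form[of t 0] by simp
    then show "\<chi> t = 1" using tr \<open>t \<in> T\<close> by simp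
  qed
  then have inC: "\<chi> \<in> chars (gen U b) T" using isc unfolding chars_def by blast
  have "Rst U \<chi> = \<psi>"
  proof
    fix x show "Rst U \<chi> x = \<psi> x"
    proof (cases "x \<in> U")
      case True then show ?thesis using form[of x 0] unfolding Rst_def by simp
    next
      case False then show ?thesis using ch_out[OF aU ch False] unfolding Rst_def by simp
    qed
  qed
  moreover have "\<chi> b = z" using form[of 0 1] asubD(1)[OF aU] ch_0[OF aU ch] by simp
  ultimately show ?thesis using inC by blast
qed

lemma step_card:
  assumes fin: "finite (chars U T)"
  shows "finite (chars (gen U b) T) \<and> card (chars (gen U b) T) = ordb U b * card (chars U T)"
proof -
  let ?m = "ordb U b"
  let ?tgt = "Sigma (chars U T) (\<lambda>\<psi>. {z. z ^ ?m = \<psi> (zn ?m b)})"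
  have nzpsi: "\<psi> (zn ?m b) \<noteq> 0" if "\<psi> \<in> chars U T" for \<psi>
    using ch_nz[OF aU] that unfolding chars_def by blast
  have cardroots: "card {z. z ^ ?m = \<psi> (zn ?m b)} = ?m" if "\<psi> \<in> chars U T" for \<psi>
    using card_nth_roots[OF nzpsi[OF that] m_pos[OF fS aS aU US bS]] .
  have finroots: "finite {z. z ^ ?m = \<psi> (zn ?m b)}" if "\<psi> \<in> chars U T" for \<psi>
    using cardroots[OF that] m_pos[OF fS aS aU US bS] card.infinite by fastforce
  have bij: "bij_betw (\<lambda>\<chi>. (Rst U \<chi>, \<chi> b)) (chars (gen U b) T) ?tgt"
  proof (rule bij_betw_imageI)
    show "inj_on (\<lambda>\<chi>. (Rst U \<chi>, \<chi> b)) (chars (gen U b) T)"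
    proof (rule inj_onI)
      fix \<chi>1 \<chi>2 assume c: "\<chi>1 \<in> chars (gen U b) T" "\<chi>2 \<in> chars (gen U b) T"
        "(Rst U \<chi>1, \<chi>1 b) = (Rst U \<chi>2, \<chi>2 b)"
      show "\<chi>1 = \<chi>2"
      proof
        fix x show "\<chi>1 x = \<chi>2 x"
        proof (cases "x \<in> gen U b")
          case True
          then obtain u k where h: "u \<in> U" "x = u + zn k b" unfolding gen_def by blast
          have "Rst U \<chi>1 u = Rst U \<chi>2 u" using c(3) by simp
          then have "\<chi>1 u = \<chi>2 u" using h unfolding Rst_def by simp
          then show ?thesis using ext_formula[OF c(1) h(1)] ext_formula[OF c(2) h(1)] c(3) h by simp
        next
          case False then show ?thesis using c(1,2) by (simp add: chars_def is_char_def)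
        qed
      qed
    qed
    show "(\<lambda>\<chi>. (Rst U \<chi>, \<chi> b)) ` chars (gen U b) T = ?tgt"
    proof
      show "(\<lambda>\<chi>. (Rst U \<chi>, \<chi> b)) ` chars (gen U b) T \<subseteq> ?tgt"
      proof
        fix p assume "p \<in> (\<lambda>\<chi>. (Rst U \<chi>, \<chi> b)) ` chars (gen U b) T"
        then obtain \<chi> where "\<chi> \<in> chars (gen U b) T" "p = (Rst U \<chi>, \<chi> b)" by blast
        then show "p \<in> ?tgt" using Rst_in root_eq by simp
      qed
      show "?tgt \<subseteq> (\<lambda>\<chi>. (Rst U \<chi>, \<chi> b)) ` chars (gen U b) T"
      proof
        fix p assume "p \<in> ?tgt"
        then obtain \<psi> z where p: "p = (\<psi>, z)" "\<psi> \<in> chars U T" "z ^ ?m = \<psi> (zn ?m b)" by blast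
        then obtain \<chi> where "\<chi> \<in> chars (gen U b) T" "Rst U \<chi> = \<psi>" "\<chi> b = z" using construct by blast
        then show "p \<in> (\<lambda>\<chi>. (Rst U \<chi>, \<chi> b)) ` chars (gen U b) T" using p by force
      qed
    qed
  qed
  have fint: "finite ?tgt" by (rule finite_SigmaI[OF fin]) (rule finroots)
  have "card ?tgt = (\<Sum>\<psi>\<in>chars U T. card {z. z ^ ?m = \<psi> (zn ?m b)})"
    by (rule card_SigmaI[OF fin]) (use finroots in blast)
  also have "\<dots> = ?m * card (chars U T)" using cardroots by simp
  finally have c: "card ?tgt = ?m * card (chars U T)" .
  have "finite (chars (gen U b) T)" using bij_betw_finite[OF bij] fint by blast
  moreover have "card (chars (gen U b) T) = card ?tgt" using bij_betw_same_card[OF bij] .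
  ultimately show ?thesis using c by simp
qed

end


lemma chars_TT: assumes "asub T" shows "chars T T = {\<lambda>_. 1}"
proof
  show "chars T T \<subseteq> {\<lambda>_. 1}"
  proof
    fix \<chi> assume c: "\<chi> \<in> chars T T"
    have "\<chi> x = 1" for x
    proof (cases "x \<in> T")
      case True then show ?thesis using c unfolding chars_def by blast
    next
      case False then show ?thesis using c by (simp add: chars_def is_char_def)
    qed
    then show "\<chi> \<in> {\<lambda>_. 1}" by auto
  qed
  show "{\<lambda>_. 1} \<subseteq> chars T T" by (simp add: chars_def is_char_def)
qed

lemma CH_aux:
  fixes S T :: "'a::ab_group_add set"
  assumes fS: "finite S" and aS: "asub S" and aT: "asub T" and TS: "T \<subseteq> S"
  shows "asub U \<Longrightarrow> T \<subseteq> U \<Longrightarrow> U \<subseteq> S \<Longrightarrow> finite (chars U T) \<Longrightarrow>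
    finite (chars S T) \<and> card (chars S T) * card U = card (chars U T) * card S"
proof (induct "card S - card U" arbitrary: U rule: less_induct)
  case less
  show ?case
  proof (cases "U = S")
    case True then show ?thesis using less by simp
  next
    case False
    then obtain b where b: "b \<in> S" "b \<notin> U" using less(4) by blast
    let ?U' = "gen U b"
    let ?m = "ordb U b"
    have aU': "asub ?U'" using gen_asub[OF fS aS less(2) less(4) b(1)] .
    have UU': "U \<subseteq> ?U'" using U_gen[OF fS aS less(2) less(4) b(1)] .
    have bU': "b \<in> ?U'" using b_gen[OF fS aS less(2) less(4) b(1)] .
    have U'S: "?U' \<subseteq> S" using gen_S[OF fS aS less(2) less(4) b(1)] .
    have st: "finite (chars ?U' T) \<and> card (chars ?U' T) = ?m * card (chars U T)"
      using step_card[OF fS aS less(2) less(4) b(1) less(3) less(5)] .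
    have cU': "card ?U' = ?m * card U" using gen_card[OF fS aS less(2) less(4) b(1)] .
    have mpos: "0 < ?m" using m_pos[OF fS aS less(2) less(4) b(1)] .
    have "U \<subset> ?U'" using UU' bU' b(2) by blast
    then have "card U < card ?U'" using psubset_card_mono[of ?U' U] U'S fS finite_subset by blast
    moreover have "card ?U' \<le> card S" using card_mono[OF fS U'S] .
    ultimately have lt: "card S - card ?U' < card S - card U" by linarith
    have IH: "finite (chars S T) \<and> card (chars S T) * card ?U' = card (chars ?U' T) * card S"
      using less(1)[OF lt aU' _ U'S] less(3) UU' st by blast
    then have "?m * (card (chars S T) * card U) = ?m * (card (chars U T) * card S)"
      using st cU' by (simp add: algebra_simps)
    then show ?thesis using mpos IH by simp
  qed
qed

lemma CH:
  fixes S T :: "'a::ab_group_add set"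
  assumes fS: "finite S" and aS: "asub S" and aT: "asub T" and TS: "T \<subseteq> S"
  shows "finite (chars S T) \<and> card (chars S T) * card T = card S"
  using CH_aux[OF fS aS aT TS aT order_refl TS] chars_TT[OF aT] by simp

lemma asub_0: "asub {0}" unfolding asub_def by simp

lemma chars_all: "asub S \<Longrightarrow> chars S {0} = {\<chi>. is_char S \<chi>}"
  unfolding chars_def using ch_0 by blast

lemma SEP:
  fixes S :: "'a::ab_group_add set"
  assumes fS: "finite S" and aS: "asub S" and a: "a \<in> S" "a \<noteq> 0"
  shows "\<exists>\<chi>. is_char S \<chi> \<and> \<chi> a \<noteq> 1"
proof (rule ccontr)
  assume "\<not> ?thesis"
  then have all: "\<And>\<chi>. is_char S \<chi> \<Longrightarrow> \<chi> a = 1" by blast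
  let ?T = "gen {0} a"
  have z: "{0} \<subseteq> S" using asubD(1)[OF aS] by simp
  have aT: "asub ?T" using gen_asub[OF fS aS asub_0 z a(1)] .
  have TS: "?T \<subseteq> S" using gen_S[OF fS aS asub_0 z a(1)] .
  have "0 \<in> ?T" "a \<in> ?T" using U_gen[OF fS aS asub_0 z a(1)] b_gen[OF fS aS asub_0 z a(1)] by auto
  then have "{0, a} \<subseteq> ?T" by simp
  moreover have "finite ?T" using TS fS finite_subset by blast
  ultimately have "card {0, a} \<le> card ?T" by (rule card_mono[rotated])
  then have cT: "2 \<le> card ?T" using a(2) by simp
  have eq: "chars S ?T = chars S {0}"
  proof
    show "chars S ?T \<subseteq> chars S {0}" using \<open>0 \<in> ?T\<close> unfolding chars_def by blast
    show "chars S {0} \<subseteq> chars S ?T"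
    proof
      fix \<chi> assume c: "\<chi> \<in> chars S {0}"
      then have ch: "is_char S \<chi>" unfolding chars_def by blast
      have "\<chi> t = 1" if tT: "t \<in> ?T" for t
      proof -
        obtain k where "t = 0 + zn k a" using tT unfolding gen_def by blast
        then show ?thesis using ch_zn[OF aS ch a(1)] all[OF ch] by simp
      qed
      then show "\<chi> \<in> chars S ?T" using ch unfolding chars_def by blast
    qed
  qed
  have c0: "card (chars S {0}) * 1 = card S" using CH[OF fS aS asub_0 z] by simp
  have c1: "card (chars S {0}) * card ?T = card S" using CH[OF fS aS aT TS] eq by simp
  have "card S > 0" using a(1) fS card_gt_0_iff by blast
  then show False using c0 c1 cT by simp
qed

lemma char_mul: "is_char S \<chi> \<Longrightarrow> is_char S \<psi> \<Longrightarrow> is_char S (\<lambda>x. \<chi> x * \<psi> x)"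
  unfolding is_char_def by (simp add: norm_mult)

lemma char_cnj: "is_char S \<chi> \<Longrightarrow> is_char S (\<lambda>x. cnj (\<chi> x))"
  unfolding is_char_def by simp

lemma ORTH:
  fixes S :: "'a::ab_group_add set"
  assumes fS: "finite S" and aS: "asub S" and a: "a \<in> S"
  shows "(\<Sum>\<chi>\<in>{\<chi>. is_char S \<chi>}. \<chi> a) = (if a = 0 then of_nat (card {\<chi>. is_char S \<chi>}) else 0)"
proof (cases "a = 0")
  case True
  have "(\<Sum>\<chi>\<in>{\<chi>. is_char S \<chi>}. \<chi> a) = (\<Sum>\<chi>\<in>{\<chi>. is_char S \<chi>}. 1)"
    using ch_0[OF aS] True by (intro sum.cong) auto
  then show ?thesis using True by simp
next
  case False
  obtain \<chi>0 where c0: "is_char S \<chi>0" "\<chi>0 a \<noteq> 1" using SEP[OF fS aS a False] by blast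
  let ?C = "{\<chi>. is_char S \<chi>}"
  have bij: "bij_betw (\<lambda>\<chi> x. \<chi>0 x * \<chi> x) ?C ?C"
  proof (rule bij_betw_imageI)
    show "inj_on (\<lambda>\<chi> x. \<chi>0 x * \<chi> x) ?C"
    proof (rule inj_onI)
      fix \<chi>1 \<chi>2 assume "(\<lambda>x. \<chi>0 x * \<chi>1 x) = (\<lambda>x. \<chi>0 x * \<chi>2 x)"
      then have "\<chi>0 x * \<chi>1 x = \<chi>0 x * \<chi>2 x" for x by metis
      then show "\<chi>1 = \<chi>2" using ch_nz[OF aS c0(1)] by (simp add: fun_eq_iff)
    qed
    show "(\<lambda>\<chi> x. \<chi>0 x * \<chi> x) ` ?C = ?C"
    proof
      show "(\<lambda>\<chi> x. \<chi>0 x * \<chi> x) ` ?C \<subseteq> ?C" using char_mul[OF c0(1)] by blast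
      show "?C \<subseteq> (\<lambda>\<chi> x. \<chi>0 x * \<chi> x) ` ?C"
      proof
        fix \<psi> assume p: "\<psi> \<in> ?C"
        have "\<psi> = (\<lambda>x. \<chi>0 x * (cnj (\<chi>0 x) * \<psi> x))"
          using ch_cnj[OF aS c0(1)] by (simp add: fun_eq_iff mult.assoc[symmetric])
        moreover have "(\<lambda>x. cnj (\<chi>0 x) * \<psi> x) \<in> ?C" using char_mul[OF char_cnj[OF c0(1)]] p by blast
        ultimately show "\<psi> \<in> (\<lambda>\<chi> x. \<chi>0 x * \<chi> x) ` ?C" by (rule image_eqI)
      qed
    qed
  qed
  have "(\<Sum>\<chi>\<in>?C. \<chi> a) = (\<Sum>\<chi>\<in>?C. (\<lambda>x. \<chi>0 x * \<chi> x) a)"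
    using sum.reindex_bij_betw[OF bij, of "\<lambda>\<chi>. \<chi> a"] by simp
  also have "\<dots> = \<chi>0 a * (\<Sum>\<chi>\<in>?C. \<chi> a)" by (simp add: sum_distrib_left)
  finally have "(1 - \<chi>0 a) * (\<Sum>\<chi>\<in>?C. \<chi> a) = 0" by (simp add: algebra_simps)
  then show ?thesis using c0(2) False by simp
qed


lemma fsum_apply: "(\<Sum>i\<in>I. f i) y = (\<Sum>i\<in>I. f i y)"
  by (induct I rule: infinite_finite_induct) auto

lemma asub_sum: "asub H \<Longrightarrow> (\<And>i. i \<in> I \<Longrightarrow> f i \<in> H) \<Longrightarrow> (\<Sum>i\<in>I. f i) \<in> H"
proof (induct I rule: infinite_finite_induct)
  case (infinite A) then show ?case using asubD(1) by simp
next
  case empty then show ?case using asubD(1) by simp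
next
  case (insert x F) then show ?case using asubD(2)[OF insert(4)] by simp
qed

lemma ch_sum:
  assumes "asub H" "is_char H \<chi>" "finite I" "\<And>i. i \<in> I \<Longrightarrow> f i \<in> H"
  shows "\<chi> (\<Sum>i\<in>I. f i) = (\<Prod>i\<in>I. \<chi> (f i))"
  using assms(3,4)
proof (induct I rule: finite_induct)
  case empty then show ?case using ch_0[OF assms(1,2)] by simp
next
  case (insert x F)
  have "(\<Sum>i\<in>F. f i) \<in> H" using asub_sum[OF assms(1)] insert by blast
  then show ?case using insert ch_mult[OF assms(1,2)] by simp
qed

definition sig :: "(int \<Rightarrow> 'k set) \<Rightarrow> (int \<times> 'k) set" where
  "sig K = Sigma {n. K n \<noteq> {}} K"

definition del :: "int \<Rightarrow> 'k \<Rightarrow> 'g::zero \<Rightarrow> int \<Rightarrow> 'k \<Rightarrow> 'g" where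
  "del n x a = (\<lambda>n' x'. if n' = n \<and> x' = x then a else 0)"

definition Phi :: "(int \<Rightarrow> 'k set) \<Rightarrow> (int \<Rightarrow> 'g::ab_group_add set) \<Rightarrow> int \<Rightarrow> (int \<Rightarrow> 'k \<Rightarrow> 'g \<Rightarrow> complex)
   \<Rightarrow> (int \<Rightarrow> 'k \<Rightarrow> 'g) \<Rightarrow> complex" where
  "Phi K G p \<rho> = (\<lambda>\<omega>. if \<omega> \<in> homU K G p then pairing K \<rho> \<omega> else 1)"

locale homctx =
  fixes K :: "int \<Rightarrow> 'k set"
    and G :: "int \<Rightarrow> 'g::ab_group_add set"
  assumes K_fin: "\<And>n. finite (K n)"
    and K_supp: "finite {n. K n \<noteq> {}}"
    and G_fin: "\<And>n. finite (G n)"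
    and G_zero: "\<And>n. 0 \<in> G n"
    and G_add: "\<And>n a b. a \<in> G n \<Longrightarrow> b \<in> G n \<Longrightarrow> a + b \<in> G n"
    and G_neg: "\<And>n a. a \<in> G n \<Longrightarrow> - a \<in> G n"
begin

lemma aG: "asub (G n)" unfolding asub_def using G_zero G_add G_neg by blast

lemma sig_fin: "finite (sig K)" unfolding sig_def using K_supp K_fin by blast

lemma sig_iff: "(n, x) \<in> sig K \<longleftrightarrow> x \<in> K n" unfolding sig_def by auto

lemma homU_asub: "asub (homU K G p)"
  unfolding asub_def homU_def using G_zero G_add G_neg by simp

lemma homU_val: "\<omega> \<in> homU K G p \<Longrightarrow> x \<in> K n \<Longrightarrow> \<omega> n x \<in> G (n - p)"
  and homU_out: "\<omega> \<in> homU K G p \<Longrightarrow> x \<notin> K n \<Longrightarrow> \<omega> n x = 0"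
  unfolding homU_def by blast+

lemma homU_fin: "finite (homU K G p)"
proof -
  define r where "r \<omega> = restrict (\<lambda>(n,x). \<omega> n x) (sig K)" for \<omega> :: "int \<Rightarrow> 'k \<Rightarrow> 'g"
  have "inj_on r (homU K G p)"
  proof (rule inj_onI)
    fix \<omega>1 \<omega>2 assume h: "\<omega>1 \<in> homU K G p" "\<omega>2 \<in> homU K G p" "r \<omega>1 = r \<omega>2"
    show "\<omega>1 = \<omega>2"
    proof (intro ext)
      fix n x show "\<omega>1 n x = \<omega>2 n x"
      proof (cases "x \<in> K n")
        case True
        then have "(n, x) \<in> sig K" using sig_iff by blast
        have "r \<omega>1 (n,x) = r \<omega>2 (n,x)" using h(3) by simp
        then show ?thesis using \<open>(n, x) \<in> sig K\<close> unfolding r_def by simp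
      next
        case False then show ?thesis using h homU_out by metis
      qed
    qed
  qed
  moreover have "r ` homU K G p \<subseteq> PiE (sig K) (\<lambda>(n,x). G (n - p))"
    using homU_val sig_iff unfolding r_def by (auto simp: PiE_def Pi_def)
  moreover have "finite (PiE (sig K) (\<lambda>(n,x). G (n - p)))"
    using sig_fin G_fin by (intro finite_PiE) auto
  ultimately show ?thesis using finite_imageD finite_subset by metis
qed

lemma homL_char: "\<rho> \<in> homL K G p \<Longrightarrow> x \<in> K n \<Longrightarrow> is_char (G (n - p)) (\<rho> n x)"
  and homL_out: "\<rho> \<in> homL K G p \<Longrightarrow> x \<notin> K n \<Longrightarrow> \<rho> n x = (\<lambda>_. 1)"
  unfolding homL_def by blast+

lemma P_sig: "pairing K \<rho> \<omega> = (\<Prod>(n,x)\<in>sig K. \<rho> n x (\<omega> n x))"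
  unfolding pairing_def sig_def using K_supp K_fin by (simp add: prod.Sigma)

lemma P_add:
  assumes "\<rho> \<in> homL K G p" "\<omega> \<in> homU K G p" "\<omega>' \<in> homU K G p"
  shows "pairing K \<rho> (\<omega> + \<omega>') = pairing K \<rho> \<omega> * pairing K \<rho> \<omega>'"
proof -
  have "(\<Prod>(n,x)\<in>sig K. \<rho> n x ((\<omega> + \<omega>') n x)) = (\<Prod>(n,x)\<in>sig K. \<rho> n x (\<omega> n x) * \<rho> n x (\<omega>' n x))"
  proof (rule prod.cong[OF refl])
    fix nx assume "nx \<in> sig K"
    then obtain n x where nx: "nx = (n, x)" "x \<in> K n" using sig_iff by (cases nx) blast
    then show "(case nx of (n, x) \<Rightarrow> \<rho> n x ((\<omega> + \<omega>') n x)) = (case nx of (n, x) \<Rightarrow> \<rho> n x (\<omega> n x) * \<rho> n x (\<omega>' n x))"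
      using ch_mult[OF aG homL_char[OF assms(1) nx(2)] homU_val[OF assms(2) nx(2)] homU_val[OF assms(3) nx(2)]]
      by simp
  qed
  then show ?thesis unfolding P_sig by (simp add: prod.distrib split_def)
qed

lemma P_norm:
  assumes "\<rho> \<in> homL K G p" "\<omega> \<in> homU K G p"
  shows "cmod (pairing K \<rho> \<omega>) = 1"
proof -
  have "cmod (pairing K \<rho> \<omega>) = (\<Prod>nx\<in>sig K. cmod (case nx of (n,x) \<Rightarrow> \<rho> n x (\<omega> n x)))"
    unfolding P_sig by (simp add: prod_norm)
  also have "\<dots> = (\<Prod>nx\<in>sig K. 1)"
  proof (rule prod.cong[OF refl])
    fix nx assume "nx \<in> sig K"
    then obtain n x where nx: "nx = (n, x)" "x \<in> K n" using sig_iff by (cases nx) blast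
    then show "cmod (case nx of (n,x) \<Rightarrow> \<rho> n x (\<omega> n x)) = 1"
      using ch_norm[OF aG homL_char[OF assms(1) nx(2)] homU_val[OF assms(2) nx(2)]] by simp
  qed
  finally show ?thesis by simp
qed

lemma P_mul: "pairing K (mulL \<rho> \<mu>) \<omega> = pairing K \<rho> \<omega> * pairing K \<mu> \<omega>"
  unfolding P_sig mulL_def by (simp add: prod.distrib split_def)

lemma P_one: "pairing K oneL \<omega> = 1"
  unfolding pairing_def oneL_def by simp

lemma del_in: "x \<in> K n \<Longrightarrow> a \<in> G (n - p) \<Longrightarrow> del n x a \<in> homU K G p"
  unfolding homU_def del_def using G_zero by auto

lemma del_add: "del n x (a + b) = del n x a + del n x (b::'g)"
  unfolding del_def by (intro ext) simp

lemma P_del: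
  assumes "\<rho> \<in> homL K G p" "x \<in> K n" "a \<in> G (n - p)"
  shows "pairing K \<rho> (del n x a) = \<rho> n x a"
proof -
  have "(\<Prod>(n',x')\<in>sig K. \<rho> n' x' (del n x a n' x')) = (\<Prod>nx\<in>sig K. if nx = (n,x) then \<rho> n x a else 1)"
  proof (rule prod.cong[OF refl])
    fix nx assume "nx \<in> sig K"
    then obtain n' x' where nx: "nx = (n', x')" "x' \<in> K n'" using sig_iff by (cases nx) blast
    show "(case nx of (n',x') \<Rightarrow> \<rho> n' x' (del n x a n' x')) = (if nx = (n,x) then \<rho> n x a else 1)"
      using nx ch_0[OF aG homL_char[OF assms(1) nx(2)]] unfolding del_def by auto
  qed
  also have "\<dots> = \<rho> n x a" using sig_fin sig_iff assms(2) by simp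
  finally show ?thesis unfolding P_sig .
qed

lemma Phi_char: assumes r: "\<rho> \<in> homL K G p" shows "is_char (homU K G p) (Phi K G p \<rho>)"
  unfolding is_char_def
proof (intro conjI ballI allI impI)
  fix a b assume ab: "a \<in> homU K G p" "b \<in> homU K G p"
  then have "a + b \<in> homU K G p" using asubD(2)[OF homU_asub] by blast
  then show "Phi K G p \<rho> (a + b) = Phi K G p \<rho> a * Phi K G p \<rho> b"
    unfolding Phi_def using P_add[OF r ab] ab by simp
next
  fix a assume "a \<in> homU K G p" then show "cmod (Phi K G p \<rho> a) = 1" unfolding Phi_def using P_norm[OF r] by simp
next
  fix a assume "a \<notin> homU K G p" then show "Phi K G p \<rho> a = 1" unfolding Phi_def by simp
qed

lemma Phi_inj:
  assumes "\<rho> \<in> homL K G p" "\<mu> \<in> homL K G p" "\<And>\<omega>. \<omega> \<in> homU K G p \<Longrightarrow> pairing K \<rho> \<omega> = pairing K \<mu> \<omega>"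
  shows "\<rho> = \<mu>"
proof (intro ext)
  fix n x a show "\<rho> n x a = \<mu> n x a"
  proof (cases "x \<in> K n")
    case True
    show ?thesis
    proof (cases "a \<in> G (n - p)")
      case True
      then show ?thesis using assms(3)[OF del_in[OF \<open>x \<in> K n\<close> True]] P_del assms(1,2) \<open>x \<in> K n\<close> by metis
    next
      case False
      then show ?thesis using ch_out[OF aG homL_char[OF assms(1) \<open>x \<in> K n\<close>]]
          ch_out[OF aG homL_char[OF assms(2) \<open>x \<in> K n\<close>]] by simp
    qed
  next
    case False then show ?thesis using homL_out assms(1,2) by simp
  qed
qed

lemma homU_expand:
  assumes "\<omega> \<in> homU K G p"
  shows "\<omega> = (\<Sum>nx\<in>sig K. del (fst nx) (snd nx) (\<omega> (fst nx) (snd nx)))"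
proof (intro ext)
  fix n x
  have "(\<Sum>nx\<in>sig K. del (fst nx) (snd nx) (\<omega> (fst nx) (snd nx))) n x
      = (\<Sum>nx\<in>sig K. if (n, x) = nx then \<omega> (fst nx) (snd nx) else 0)"
    unfolding fsum_apply del_def by (intro sum.cong) auto
  also have "\<dots> = (if (n,x) \<in> sig K then \<omega> n x else 0)" using sig_fin by simp
  also have "\<dots> = \<omega> n x" using homU_out[OF assms] sig_iff by auto
  finally show "\<omega> n x = (\<Sum>nx\<in>sig K. del (fst nx) (snd nx) (\<omega> (fst nx) (snd nx))) n x" by simp
qed

lemma Phi_surj:
  assumes ch: "is_char (homU K G p) \<chi>"
  shows "\<exists>\<rho>\<in>homL K G p. \<forall>\<omega>\<in>homU K G p. pairing K \<rho> \<omega> = \<chi> \<omega>"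
proof -
  define \<rho> where "\<rho> n x a = (if x \<in> K n \<and> a \<in> G (n - p) then \<chi> (del n x a) else 1)" for n x a
  have "\<rho> \<in> homL K G p"
    unfolding homL_def
  proof (intro CollectI allI conjI impI)
    fix n x assume x: "x \<in> K n"
    show "is_char (G (n - p)) (\<rho> n x)"
      unfolding is_char_def
    proof (intro conjI ballI allI impI)
      fix a b assume ab: "a \<in> G (n - p)" "b \<in> G (n - p)"
      then have "a + b \<in> G (n - p)" using G_add by blast
      have "\<chi> (del n x (a + b)) = \<chi> (del n x a + del n x b)" by (simp only: del_add)
      also have "\<dots> = \<chi> (del n x a) * \<chi> (del n x b)"
        using ch_mult[OF homU_asub ch del_in[OF x ab(1)] del_in[OF x ab(2)]] .
      finally show "\<rho> n x (a + b) = \<rho> n x a * \<rho> n x b"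
        unfolding \<rho>_def using x ab \<open>a + b \<in> G (n - p)\<close> by simp
    next
      fix a assume "a \<in> G (n - p)"
      then show "cmod (\<rho> n x a) = 1" unfolding \<rho>_def using x ch_norm[OF homU_asub ch del_in[OF x]] by simp
    next
      fix a assume "a \<notin> G (n - p)" then show "\<rho> n x a = 1" unfolding \<rho>_def by simp
    qed
  next
    fix n x assume "x \<notin> K n" then show "\<rho> n x = (\<lambda>_. 1)" unfolding \<rho>_def by (intro ext) simp
  qed
  moreover have "pairing K \<rho> \<omega> = \<chi> \<omega>" if w: "\<omega> \<in> homU K G p" for \<omega>
  proof -
    have dinm: "del (fst nx) (snd nx) (\<omega> (fst nx) (snd nx)) \<in> homU K G p" if nxs: "nx \<in> sig K" for nx
    proof -
      obtain n x where nx: "nx = (n, x)" "x \<in> K n" using nxs sig_iff by (cases nx) blast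
      then show ?thesis using del_in[OF nx(2) homU_val[OF w nx(2)]] by simp
    qed
    have "\<chi> \<omega> = \<chi> (\<Sum>nx\<in>sig K. del (fst nx) (snd nx) (\<omega> (fst nx) (snd nx)))"
      using arg_cong[OF homU_expand[OF w], of \<chi>] .
    also have "\<dots> = (\<Prod>nx\<in>sig K. \<chi> (del (fst nx) (snd nx) (\<omega> (fst nx) (snd nx))))"
      by (rule ch_sum[OF homU_asub ch sig_fin]) (rule dinm)
    also have "\<dots> = (\<Prod>nx\<in>sig K. \<rho> (fst nx) (snd nx) (\<omega> (fst nx) (snd nx)))"
    proof (rule prod.cong[OF refl])
      fix nx assume "nx \<in> sig K"
      then obtain n x where nx: "nx = (n, x)" "x \<in> K n" using sig_iff by (cases nx) blast
      then show "\<chi> (del (fst nx) (snd nx) (\<omega> (fst nx) (snd nx))) = \<rho> (fst nx) (snd nx) (\<omega> (fst nx) (snd nx))"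
        unfolding \<rho>_def using homU_val[OF w nx(2)] by simp
    qed
    also have "\<dots> = pairing K \<rho> \<omega>" unfolding P_sig by (simp add: split_def)
    finally show ?thesis by simp
  qed
  ultimately show ?thesis by blast
qed

lemma Phi_bij: "bij_betw (Phi K G p) (homL K G p) {\<chi>. is_char (homU K G p) \<chi>}"
proof (rule bij_betw_imageI)
  show "inj_on (Phi K G p) (homL K G p)"
  proof (rule inj_onI)
    fix \<rho> \<mu> assume h: "\<rho> \<in> homL K G p" "\<mu> \<in> homL K G p" "Phi K G p \<rho> = Phi K G p \<mu>"
    show "\<rho> = \<mu>"
    proof (rule Phi_inj[OF h(1,2)])
      fix \<omega> assume "\<omega> \<in> homU K G p"
      then show "pairing K \<rho> \<omega> = pairing K \<mu> \<omega>" using fun_cong[OF h(3), of \<omega>] unfolding Phi_def by simp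
    qed
  qed
  show "Phi K G p ` homL K G p = {\<chi>. is_char (homU K G p) \<chi>}"
  proof
    show "Phi K G p ` homL K G p \<subseteq> {\<chi>. is_char (homU K G p) \<chi>}" using Phi_char by blast
    show "{\<chi>. is_char (homU K G p) \<chi>} \<subseteq> Phi K G p ` homL K G p"
    proof
      fix \<chi> assume "\<chi> \<in> {\<chi>. is_char (homU K G p) \<chi>}"
      then have ch: "is_char (homU K G p) \<chi>" by simp
      obtain \<rho> where r: "\<rho> \<in> homL K G p" "\<forall>\<omega>\<in>homU K G p. pairing K \<rho> \<omega> = \<chi> \<omega>" using Phi_surj[OF ch] by blast
      have "Phi K G p \<rho> = \<chi>"
      proof
        fix \<omega> show "Phi K G p \<rho> \<omega> = \<chi> \<omega>"
          using r ch_out[OF homU_asub ch] unfolding Phi_def by (cases "\<omega> \<in> homU K G p") auto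
      qed
      then show "\<chi> \<in> Phi K G p ` homL K G p" using r(1) by blast
    qed
  qed
qed

lemma homL_card: "finite (homL K G p) \<and> card (homL K G p) = card (homU K G p)"
proof -
  have "finite {\<chi>. is_char (homU K G p) \<chi>} \<and> card {\<chi>. is_char (homU K G p) \<chi>} = card (homU K G p)"
    using CH[OF homU_fin homU_asub asub_0] chars_all[OF homU_asub] asubD(1)[OF homU_asub] by simp
  then show ?thesis using bij_betw_finite[OF Phi_bij] bij_betw_same_card[OF Phi_bij] by simp
qed

end


locale dctx = homctx K G for K :: "int \<Rightarrow> 'k set" and G :: "int \<Rightarrow> 'g::ab_group_add set" +
  fixes c :: "int \<Rightarrow> 'k \<Rightarrow> 'k \<Rightarrow> int" and dG :: "int \<Rightarrow> 'g \<Rightarrow> 'g"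
  assumes C_complex: "\<And>n x z. x \<in> K n \<Longrightarrow> z \<in> K (n - 2) \<Longrightarrow>
                       (\<Sum>y\<in>K (n - 1). c n x y * c (n - 1) y z) = 0"
    and dG_maps: "\<And>n a. a \<in> G n \<Longrightarrow> dG n a \<in> G (n - 1)"
    and dG_add: "\<And>n a b. a \<in> G n \<Longrightarrow> b \<in> G n \<Longrightarrow> dG n (a + b) = dG n a + dG n b"
    and G_complex: "\<And>n a. a \<in> G n \<Longrightarrow> dG (n - 1) (dG n a) = 0"
begin

lemma dG_zs: "a \<in> G n \<Longrightarrow> dG n (zsmult k a) = zsmult k (dG n a)"
  by (rule zs_hom) (use G_zero G_add G_neg dG_add in auto)

lemma dG_0: "dG n 0 = 0"
  using dG_add[OF G_zero G_zero, of n] by simp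

lemma dG_sum: "(\<And>i. i \<in> I \<Longrightarrow> f i \<in> G n) \<Longrightarrow> dG n (\<Sum>i\<in>I. f i) = (\<Sum>i\<in>I. dG n (f i))"
proof (induct I rule: infinite_finite_induct)
  case (infinite A) then show ?case using dG_0 by simp
next
  case empty then show ?case using dG_0 by simp
next
  case (insert x F)
  have "(\<Sum>i\<in>F. f i) \<in> G n" using asub_sum[OF aG] insert by blast
  then show ?case using insert dG_add by simp
qed

lemma dU_at: "x \<in> K n \<Longrightarrow> dU K c dG p \<omega> n x =
   (\<Sum>y\<in>K (n - 1). zsmult (c n x y) (\<omega> (n - 1) y)) - (if even p then dG (n - p) (\<omega> n x) else - dG (n - p) (\<omega> n x))"
  unfolding dU_def by simp

lemma dU_out: "x \<notin> K n \<Longrightarrow> dU K c dG p \<omega> n x = 0"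
  unfolding dU_def by simp

lemma dU_in:
  assumes w: "\<omega> \<in> homU K G p"
  shows "dU K c dG p \<omega> \<in> homU K G (p + 1)"
  unfolding homU_def
proof (intro CollectI allI conjI impI)
  fix n x assume x: "x \<in> K n"
  have e1: "n - 1 - p = n - (p + 1)" and e2: "n - p - 1 = n - (p + 1)" by simp_all
  have "zsmult (c n x y) (\<omega> (n - 1) y) \<in> G (n - (p + 1))" if "y \<in> K (n - 1)" for y
    using asub_zs[OF aG homU_val[OF w that]] e1 by simp
  then have s: "(\<Sum>y\<in>K (n - 1). zsmult (c n x y) (\<omega> (n - 1) y)) \<in> G (n - (p + 1))"
    by (rule asub_sum[OF aG])
  have d: "dG (n - p) (\<omega> n x) \<in> G (n - (p + 1))" using dG_maps[OF homU_val[OF w x]] e2 by simp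
  show "dU K c dG p \<omega> n x \<in> G (n - (p + 1))"
    unfolding dU_at[OF x] using asubD(3,4)[OF aG] s d by simp
next
  fix n x assume "x \<notin> K n" then show "dU K c dG p \<omega> n x = 0" by (rule dU_out)
qed

lemma dU_add:
  assumes w: "\<omega> \<in> homU K G p" "\<omega>' \<in> homU K G p"
  shows "dU K c dG p (\<omega> + \<omega>') = dU K c dG p \<omega> + dU K c dG p \<omega>'"
proof (intro ext)
  fix n x show "dU K c dG p (\<omega> + \<omega>') n x = (dU K c dG p \<omega> + dU K c dG p \<omega>') n x"
  proof (cases "x \<in> K n")
    case True
    have "(\<Sum>y\<in>K (n - 1). zsmult (c n x y) ((\<omega> + \<omega>') (n - 1) y))
        = (\<Sum>y\<in>K (n - 1). zsmult (c n x y) (\<omega> (n - 1) y)) + (\<Sum>y\<in>K (n - 1). zsmult (c n x y) (\<omega>' (n - 1) y))"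
      by (simp add: zs_add_right sum.distrib)
    moreover have "dG (n - p) ((\<omega> + \<omega>') n x) = dG (n - p) (\<omega> n x) + dG (n - p) (\<omega>' n x)"
      using dG_add[OF homU_val[OF w(1) True] homU_val[OF w(2) True]] by simp
    ultimately show ?thesis unfolding plus_fun_apply dU_at[OF True] by (simp add: algebra_simps)
  next
    case False then show ?thesis by (simp add: dU_out)
  qed
qed

lemma dU_m1_at: "y \<in> K m \<Longrightarrow> dU K c dG (-1) \<alpha> m y =
   (\<Sum>z\<in>K (m - 1). zsmult (c m y z) (\<alpha> (m - 1) z)) + dG (m + 1) (\<alpha> m y)"
  using dU_at[of y m "-1" \<alpha>] by simp

lemma dU_0_at: "x \<in> K n \<Longrightarrow> dU K c dG 0 \<beta> n x =
   (\<Sum>y\<in>K (n - 1). zsmult (c n x y) (\<beta> (n - 1) y)) - dG n (\<beta> n x)"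
  using dU_at[of x n 0 \<beta>] by simp

lemma dU_dd:
  assumes a: "\<alpha> \<in> homU K G (-1)"
  shows "dU K c dG 0 (dU K c dG (-1) \<alpha>) = 0"
proof (intro ext)
  fix n x
  let ?b = "dU K c dG (-1) \<alpha>"
  show "dU K c dG 0 ?b n x = 0 n x"
  proof (cases "x \<in> K n")
    case False then show ?thesis by (simp add: dU_out)
  next
    case x: True
    have aval: "\<alpha> (n - 1) y \<in> G n" if "y \<in> K (n - 1)" for y
      using homU_val[OF a that] by simp
    have anx: "\<alpha> n x \<in> G (n + 1)" using homU_val[OF a x] by simp
    have b1: "?b (n - 1) y = (\<Sum>z\<in>K (n - 2). zsmult (c (n - 1) y z) (\<alpha> (n - 2) z)) + dG n (\<alpha> (n - 1) y)"
      if "y \<in> K (n - 1)" for y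
      using dU_m1_at[OF that, of \<alpha>] by simp
    have b2: "?b n x = (\<Sum>y\<in>K (n - 1). zsmult (c n x y) (\<alpha> (n - 1) y)) + dG (n + 1) (\<alpha> n x)"
      using dU_m1_at[OF x, of \<alpha>] by simp
    define B where "B = (\<Sum>y\<in>K (n - 1). zsmult (c n x y) (dG n (\<alpha> (n - 1) y)))"
    have A0: "(\<Sum>y\<in>K (n - 1). zsmult (c n x y) (\<Sum>z\<in>K (n - 2). zsmult (c (n - 1) y z) (\<alpha> (n - 2) z))) = 0"
    proof -
      have "(\<Sum>y\<in>K (n - 1). zsmult (c n x y) (\<Sum>z\<in>K (n - 2). zsmult (c (n - 1) y z) (\<alpha> (n - 2) z)))
          = (\<Sum>y\<in>K (n - 1). \<Sum>z\<in>K (n - 2). zsmult (c n x y * c (n - 1) y z) (\<alpha> (n - 2) z))"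
        by (simp add: zs_sum_right zs_mult)
      also have "\<dots> = (\<Sum>z\<in>K (n - 2). \<Sum>y\<in>K (n - 1). zsmult (c n x y * c (n - 1) y z) (\<alpha> (n - 2) z))"
        by (rule sum.swap)
      also have "\<dots> = (\<Sum>z\<in>K (n - 2). zsmult (\<Sum>y\<in>K (n - 1). c n x y * c (n - 1) y z) (\<alpha> (n - 2) z))"
        by (simp add: zs_sum_left)
      also have "\<dots> = 0" using C_complex[OF x] by simp
      finally show ?thesis .
    qed
    have T1: "(\<Sum>y\<in>K (n - 1). zsmult (c n x y) (?b (n - 1) y)) = B"
    proof -
      have "(\<Sum>y\<in>K (n - 1). zsmult (c n x y) (?b (n - 1) y))
          = (\<Sum>y\<in>K (n - 1). zsmult (c n x y) (\<Sum>z\<in>K (n - 2). zsmult (c (n - 1) y z) (\<alpha> (n - 2) z))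
              + zsmult (c n x y) (dG n (\<alpha> (n - 1) y)))"
        using b1 by (intro sum.cong) (simp_all add: zs_add_right)
      also have "\<dots> = B" using A0 unfolding B_def by (simp add: sum.distrib)
      finally show ?thesis .
    qed
    have T2: "dG n (?b n x) = B"
    proof -
      have s: "(\<Sum>y\<in>K (n - 1). zsmult (c n x y) (\<alpha> (n - 1) y)) \<in> G n"
        by (rule asub_sum[OF aG]) (rule asub_zs[OF aG aval])
      have d: "dG (n + 1) (\<alpha> n x) \<in> G n" using dG_maps[OF anx] by simp
      have "dG n (?b n x) = dG n (\<Sum>y\<in>K (n - 1). zsmult (c n x y) (\<alpha> (n - 1) y)) + dG n (dG (n + 1) (\<alpha> n x))"
        using b2 dG_add[OF s d] by simp
      also have "dG n (dG (n + 1) (\<alpha> n x)) = 0" using G_complex[OF anx] by simp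
      also have "dG n (\<Sum>y\<in>K (n - 1). zsmult (c n x y) (\<alpha> (n - 1) y)) = B"
        unfolding B_def using dG_sum[of "K (n - 1)" "\<lambda>y. zsmult (c n x y) (\<alpha> (n - 1) y)" n]
          asub_zs[OF aG aval] dG_zs[OF aval] by simp
      finally show ?thesis by simp
    qed
    show ?thesis unfolding dU_0_at[OF x] T1 T2 by simp
  qed
qed

lemma dL_char:
  assumes nu: "\<nu> \<in> homL K G q"
  shows "dL K G c dG q \<nu> \<in> homL K G (q - 1) \<and>
    (\<forall>\<omega>\<in>homU K G (q - 1). pairing K (dL K G c dG q \<nu>) \<omega> = pairing K \<nu> (dU K c dG (q - 1) \<omega>))"
proof -
  let ?P = "\<lambda>\<mu>. \<mu> \<in> homL K G (q - 1) \<and>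
      (\<forall>\<omega>\<in>homU K G (q - 1). pairing K \<mu> \<omega> = pairing K \<nu> (dU K c dG (q - 1) \<omega>))"
  define \<chi> where "\<chi> \<omega> = (if \<omega> \<in> homU K G (q - 1) then pairing K \<nu> (dU K c dG (q - 1) \<omega>) else 1)" for \<omega>
  have din: "dU K c dG (q - 1) \<omega> \<in> homU K G q" if "\<omega> \<in> homU K G (q - 1)" for \<omega>
    using dU_in[OF that] by simp
  have ch: "is_char (homU K G (q - 1)) \<chi>"
    unfolding is_char_def
  proof (intro conjI ballI allI impI)
    fix a b assume ab: "a \<in> homU K G (q - 1)" "b \<in> homU K G (q - 1)"
    then have "a + b \<in> homU K G (q - 1)" using asubD(2)[OF homU_asub] by blast
    then show "\<chi> (a + b) = \<chi> a * \<chi> b"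
      unfolding \<chi>_def using ab dU_add[OF ab] P_add[OF nu din din] by simp
  next
    fix a assume "a \<in> homU K G (q - 1)"
    then show "cmod (\<chi> a) = 1" unfolding \<chi>_def using P_norm[OF nu din] by simp
  next
    fix a assume "a \<notin> homU K G (q - 1)" then show "\<chi> a = 1" unfolding \<chi>_def by simp
  qed
  obtain \<mu> where mu: "\<mu> \<in> homL K G (q - 1)" "\<forall>\<omega>\<in>homU K G (q - 1). pairing K \<mu> \<omega> = \<chi> \<omega>"
    using Phi_surj[OF ch] by blast
  have "?P \<mu>" using mu unfolding \<chi>_def by simp
  moreover have "\<mu>' = \<mu>" if "?P \<mu>'" for \<mu>'
    using Phi_inj[of \<mu>' "q - 1" \<mu>] that mu unfolding \<chi>_def by simp
  ultimately have "?P (THE \<mu>. ?P \<mu>)" by (rule theI)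
  then show ?thesis unfolding dL_def .
qed

end


lemma hom_0: "asub A \<Longrightarrow> (\<And>a b. a \<in> A \<Longrightarrow> b \<in> A \<Longrightarrow> f (a + b) = f a + f b) \<Longrightarrow> f 0 = (0::'b::ab_group_add)"
  using asubD(1) by (metis add_cancel_right_right)

lemma hom_neg:
  assumes "asub A" "\<And>a b. a \<in> A \<Longrightarrow> b \<in> A \<Longrightarrow> f (a + b) = f a + f b" "a \<in> A"
  shows "f (- a) = - (f a::'b::ab_group_add)"
proof -
  have "f (- a + a) = f (- a) + f a" by (rule assms(2)[OF asubD(3)[OF assms(1) assms(3)] assms(3)])
  then have "f (- a) + f a = 0" using hom_0[OF assms(1,2)] by simp
  then show ?thesis by (simp add: eq_neg_iff_add_eq_0)
qed

lemma hom_diff: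
  assumes "asub A" "\<And>a b. a \<in> A \<Longrightarrow> b \<in> A \<Longrightarrow> f (a + b) = f a + f b" "a \<in> A" "b \<in> A"
  shows "f (a - b) = f a - (f b::'b::ab_group_add)"
proof -
  have "f (a + - b) = f a + f (- b)" by (rule assms(2)[OF assms(3) asubD(3)[OF assms(1) assms(4)]])
  then show ?thesis using hom_neg[OF assms(1,2,4)] by (simp add: diff_conv_add_uminus del: add_uminus_conv_diff)
qed

lemma asub_img:
  assumes "asub A" "\<And>a b. a \<in> A \<Longrightarrow> b \<in> A \<Longrightarrow> f (a + b) = f a + f b"
  shows "asub (f ` A :: 'b::ab_group_add set)"
  unfolding asub_def
proof (intro conjI ballI)
  show "0 \<in> f ` A" using hom_0[OF assms] asubD(1)[OF assms(1)] by (metis image_eqI)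
next
  fix x y assume "x \<in> f ` A" "y \<in> f ` A"
  then obtain a b where "a \<in> A" "b \<in> A" "x = f a" "y = f b" by blast
  then show "x + y \<in> f ` A" using assms(2) asubD(2)[OF assms(1)] by (metis image_eqI)
next
  fix x assume "x \<in> f ` A"
  then obtain a where "a \<in> A" "x = f a" by blast
  then show "- x \<in> f ` A" using hom_neg[OF assms] asubD(3)[OF assms(1)] by (metis image_eqI)
qed

lemma asub_ker:
  assumes "asub A" "\<And>a b. a \<in> A \<Longrightarrow> b \<in> A \<Longrightarrow> f (a + b) = f a + f b"
  shows "asub {a\<in>A. f a = (0::'b::ab_group_add)}"
  unfolding asub_def using hom_0[OF assms] hom_neg[OF assms] assms asubD[OF assms(1)] by simp

definition invL :: "(int \<Rightarrow> 'k \<Rightarrow> 'g \<Rightarrow> complex) \<Rightarrow> (int \<Rightarrow> 'k \<Rightarrow> 'g \<Rightarrow> complex)" where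
  "invL \<rho> = (\<lambda>n x a. cnj (\<rho> n x a))"

context homctx
begin

lemma oneL_in: "oneL \<in> homL K G p"
  unfolding homL_def oneL_def is_char_def by simp

lemma mulL_in: "\<rho> \<in> homL K G p \<Longrightarrow> \<mu> \<in> homL K G p \<Longrightarrow> mulL \<rho> \<mu> \<in> homL K G p"
  unfolding homL_def mulL_def using char_mul by fastforce

lemma invL_in: "\<rho> \<in> homL K G p \<Longrightarrow> invL \<rho> \<in> homL K G p"
  unfolding homL_def invL_def using char_cnj by fastforce

lemma cgrp_L: "cgrp (homL K G p) mulL invL oneL"
proof
  fix x y z :: "int \<Rightarrow> 'k \<Rightarrow> 'g \<Rightarrow> complex"
  show "x \<in> homL K G p \<Longrightarrow> y \<in> homL K G p \<Longrightarrow> mulL x y \<in> homL K G p" by (rule mulL_in)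
  show "x \<in> homL K G p \<Longrightarrow> invL x \<in> homL K G p" by (rule invL_in)
  show "oneL \<in> homL K G p" by (rule oneL_in)
  show "mulL (mulL x y) z = mulL x (mulL y z)" unfolding mulL_def by (simp add: mult.assoc)
  show "mulL x y = mulL y x" unfolding mulL_def by (simp add: mult.commute)
  show "mulL oneL x = x" unfolding mulL_def oneL_def by simp
  assume x: "x \<in> homL K G p"
  show "mulL (invL x) x = oneL"
    unfolding mulL_def invL_def oneL_def
  proof (intro ext)
    fix n k a show "cnj (x n k a) * x n k a = 1"
    proof (cases "k \<in> K n")
      case True then show ?thesis using ch_cnj[OF aG homL_char[OF x True], of a] by (simp add: mult.commute)
    next
      case False then show ?thesis using homL_out[OF x False] by simp
    qed
  qed
qed

lemma P_inv: "pairing K (invL \<rho>) \<omega> = cnj (pairing K \<rho> \<omega>)"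
  unfolding P_sig invL_def by (simp add: split_def)

lemma P_zero: assumes r: "\<rho> \<in> homL K G p" shows "pairing K \<rho> 0 = 1"
  unfolding P_sig
proof (rule prod.neutral, intro ballI)
  fix nx assume "nx \<in> sig K"
  then obtain n x where nx: "nx = (n, x)" "x \<in> K n" using sig_iff by (cases nx) blast
  then show "(case nx of (n, x) \<Rightarrow> \<rho> n x (0 n x)) = 1" using ch_0[OF aG homL_char[OF r nx(2)]] by simp
qed

definition Ann :: "int \<Rightarrow> (int \<Rightarrow> 'k \<Rightarrow> 'g) set \<Rightarrow> (int \<Rightarrow> 'k \<Rightarrow> 'g \<Rightarrow> complex) set" where
  "Ann p T = {\<rho> \<in> homL K G p. \<forall>t\<in>T. pairing K \<rho> t = 1}"

lemma Ann_sub: "cgrp.sub (homL K G p) mulL invL oneL (Ann p T)"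
  unfolding cgrp.sub_def[OF cgrp_L]
proof (intro conjI ballI)
  show "Ann p T \<subseteq> homL K G p" unfolding Ann_def by blast
  show "oneL \<in> Ann p T" unfolding Ann_def by (simp add: oneL_in P_one)
  fix x assume x: "x \<in> Ann p T"
  show "invL x \<in> Ann p T" using x invL_in unfolding Ann_def by (simp add: P_inv)
  fix y assume y: "y \<in> Ann p T"
  show "mulL x y \<in> Ann p T" using x y mulL_in unfolding Ann_def by (simp add: P_mul)
qed

lemma Ann_card:
  assumes "asub T" "T \<subseteq> homU K G p"
  shows "finite (Ann p T) \<and> card (Ann p T) * card T = card (homU K G p)"
proof -
  have bij: "bij_betw (Phi K G p) (Ann p T) (chars (homU K G p) T)"
  proof -
    have "inj_on (Phi K G p) (homL K G p)" using Phi_bij by (rule bij_betw_imp_inj_on)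
    moreover have "Ann p T \<subseteq> homL K G p" unfolding Ann_def by blast
    ultimately have "inj_on (Phi K G p) (Ann p T)" by (rule inj_on_subset)
    then have "bij_betw (Phi K G p) (Ann p T) (Phi K G p ` Ann p T)" by (rule inj_on_imp_bij_betw)
    moreover have "Phi K G p ` Ann p T = chars (homU K G p) T"
    proof
      show "Phi K G p ` Ann p T \<subseteq> chars (homU K G p) T"
      proof
        fix \<chi> assume "\<chi> \<in> Phi K G p ` Ann p T"
        then obtain \<rho> where r: "\<rho> \<in> Ann p T" "\<chi> = Phi K G p \<rho>" by blast
        have "is_char (homU K G p) \<chi>" using Phi_char r unfolding Ann_def by blast
        moreover have "\<chi> t = 1" if t: "t \<in> T" for t
        proof -
          have "t \<in> homU K G p" using t assms(2) by blast
          then show ?thesis using r t unfolding Ann_def Phi_def by simp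
        qed
        ultimately show "\<chi> \<in> chars (homU K G p) T" unfolding chars_def by blast
      qed
      show "chars (homU K G p) T \<subseteq> Phi K G p ` Ann p T"
      proof
        fix \<chi> assume c: "\<chi> \<in> chars (homU K G p) T"
        then have "\<chi> \<in> Phi K G p ` homL K G p" using Phi_bij unfolding bij_betw_def chars_def by blast
        then obtain \<rho> where r: "\<rho> \<in> homL K G p" "\<chi> = Phi K G p \<rho>" by blast
        have "pairing K \<rho> t = 1" if t: "t \<in> T" for t
        proof -
          have "t \<in> homU K G p" using t assms(2) by blast
          moreover have "\<chi> t = 1" using c t unfolding chars_def by blast
          ultimately show ?thesis using r(2) unfolding Phi_def by simp
        qed
        then show "\<chi> \<in> Phi K G p ` Ann p T" using r unfolding Ann_def by blast
      qed
    qed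
    ultimately show ?thesis by simp
  qed
  have "finite (chars (homU K G p) T) \<and> card (chars (homU K G p) T) * card T = card (homU K G p)"
    using CH[OF homU_fin homU_asub assms] .
  then show ?thesis using bij_betw_finite[OF bij] bij_betw_same_card[OF bij] by simp
qed

end


context dctx
begin

definition Zs where "Zs = {\<omega> \<in> homU K G 0. dU K c dG 0 \<omega> = 0}"
definition Bs where "Bs = dU K c dG (-1) ` homU K G (-1)"

lemma d0_in: "\<omega> \<in> homU K G 0 \<Longrightarrow> dU K c dG 0 \<omega> \<in> homU K G 1"
  using dU_in[of \<omega> 0] by simp

lemma dm_in: "\<alpha> \<in> homU K G (-1) \<Longrightarrow> dU K c dG (-1) \<alpha> \<in> homU K G 0"
  using dU_in[of \<alpha> "-1"] by simp

lemma d0_add: "a \<in> homU K G 0 \<Longrightarrow> b \<in> homU K G 0 \<Longrightarrow> dU K c dG 0 (a + b) = dU K c dG 0 a + dU K c dG 0 b"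
  by (rule dU_add)

lemma dm_add: "a \<in> homU K G (-1) \<Longrightarrow> b \<in> homU K G (-1) \<Longrightarrow> dU K c dG (-1) (a + b) = dU K c dG (-1) a + dU K c dG (-1) b"
  by (rule dU_add)

lemma D1: "\<beta> \<in> homL K G 1 \<Longrightarrow> dL K G c dG 1 \<beta> \<in> homL K G 0 \<and>
   (\<forall>\<omega>\<in>homU K G 0. pairing K (dL K G c dG 1 \<beta>) \<omega> = pairing K \<beta> (dU K c dG 0 \<omega>))"
  using dL_char[of \<beta> 1] by simp

lemma D0: "\<rho> \<in> homL K G 0 \<Longrightarrow> dL K G c dG 0 \<rho> \<in> homL K G (-1) \<and>
   (\<forall>\<alpha>\<in>homU K G (-1). pairing K (dL K G c dG 0 \<rho>) \<alpha> = pairing K \<rho> (dU K c dG (-1) \<alpha>))"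
  using dL_char[of \<rho> 0] by simp

lemma Zs_asub: "asub Zs"
  unfolding Zs_def by (rule asub_ker[OF homU_asub]) (rule d0_add)

lemma Bs_asub: "asub Bs"
  unfolding Bs_def by (rule asub_img[OF homU_asub]) (rule dm_add)

lemma Zs_V0: "Zs \<subseteq> homU K G 0" unfolding Zs_def by blast

lemma Bs_Zs: "Bs \<subseteq> Zs"
  unfolding Bs_def Zs_def using dm_in dU_dd by blast

lemma Zs_fin: "finite Zs" using Zs_V0 homU_fin finite_subset by blast
lemma Bs_fin: "finite Bs" using Bs_Zs Zs_fin finite_subset by blast

lemma cardZ_pos: "card Zs > 0" using Zs_fin asubD(1)[OF Zs_asub] card_gt_0_iff by blast
lemma cardB_pos: "card Bs > 0" using Bs_fin asubD(1)[OF Bs_asub] card_gt_0_iff by blast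

lemma kerD0: "{\<rho> \<in> homL K G 0. dL K G c dG 0 \<rho> = oneL} = Ann 0 Bs"
proof
  show "{\<rho> \<in> homL K G 0. dL K G c dG 0 \<rho> = oneL} \<subseteq> Ann 0 Bs"
  proof
    fix \<rho> assume r: "\<rho> \<in> {\<rho> \<in> homL K G 0. dL K G c dG 0 \<rho> = oneL}"
    have "pairing K \<rho> t = 1" if t: "t \<in> Bs" for t
    proof -
      obtain \<alpha> where a: "\<alpha> \<in> homU K G (-1)" "t = dU K c dG (-1) \<alpha>" using t unfolding Bs_def by blast
      have "pairing K (dL K G c dG 0 \<rho>) \<alpha> = pairing K \<rho> (dU K c dG (-1) \<alpha>)" using D0[of \<rho>] r a by blast
      then have "pairing K \<rho> (dU K c dG (-1) \<alpha>) = pairing K oneL \<alpha>" using r by simp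
      then show ?thesis using a P_one by simp
    qed
    then show "\<rho> \<in> Ann 0 Bs" using r unfolding Ann_def by blast
  qed
  show "Ann 0 Bs \<subseteq> {\<rho> \<in> homL K G 0. dL K G c dG 0 \<rho> = oneL}"
  proof
    fix \<rho> assume r: "\<rho> \<in> Ann 0 Bs"
    then have rL: "\<rho> \<in> homL K G 0" unfolding Ann_def by blast
    have "dL K G c dG 0 \<rho> = oneL"
    proof (rule Phi_inj)
      show "dL K G c dG 0 \<rho> \<in> homL K G (-1)" using D0[OF rL] by blast
      show "oneL \<in> homL K G (-1)" by (rule oneL_in)
      fix \<alpha> assume a: "\<alpha> \<in> homU K G (-1)"
      have "dU K c dG (-1) \<alpha> \<in> Bs" using a unfolding Bs_def by blast
      then have "pairing K \<rho> (dU K c dG (-1) \<alpha>) = 1" using r unfolding Ann_def by blast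
      then show "pairing K (dL K G c dG 0 \<rho>) \<alpha> = pairing K oneL \<alpha>" using D0[OF rL] a P_one by simp
    qed
    then show "\<rho> \<in> {\<rho> \<in> homL K G 0. dL K G c dG 0 \<rho> = oneL}" using rL by blast
  qed
qed

lemma kerD1: "{\<beta> \<in> homL K G 1. dL K G c dG 1 \<beta> = oneL} = Ann 1 (dU K c dG 0 ` homU K G 0)"
proof
  show "{\<beta> \<in> homL K G 1. dL K G c dG 1 \<beta> = oneL} \<subseteq> Ann 1 (dU K c dG 0 ` homU K G 0)"
  proof
    fix \<beta> assume r: "\<beta> \<in> {\<beta> \<in> homL K G 1. dL K G c dG 1 \<beta> = oneL}"
    have "pairing K \<beta> t = 1" if t: "t \<in> dU K c dG 0 ` homU K G 0" for t
    proof -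
      obtain \<omega> where a: "\<omega> \<in> homU K G 0" "t = dU K c dG 0 \<omega>" using t by blast
      have "pairing K (dL K G c dG 1 \<beta>) \<omega> = pairing K \<beta> (dU K c dG 0 \<omega>)" using D1[of \<beta>] r a by blast
      then have "pairing K \<beta> (dU K c dG 0 \<omega>) = pairing K oneL \<omega>" using r by simp
      then show ?thesis using a P_one by simp
    qed
    then show "\<beta> \<in> Ann 1 (dU K c dG 0 ` homU K G 0)" using r unfolding Ann_def by blast
  qed
  show "Ann 1 (dU K c dG 0 ` homU K G 0) \<subseteq> {\<beta> \<in> homL K G 1. dL K G c dG 1 \<beta> = oneL}"
  proof
    fix \<beta> assume r: "\<beta> \<in> Ann 1 (dU K c dG 0 ` homU K G 0)"
    then have rL: "\<beta> \<in> homL K G 1" unfolding Ann_def by blast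
    have "dL K G c dG 1 \<beta> = oneL"
    proof (rule Phi_inj)
      show "dL K G c dG 1 \<beta> \<in> homL K G 0" using D1[OF rL] by blast
      show "oneL \<in> homL K G 0" by (rule oneL_in)
      fix \<omega> assume a: "\<omega> \<in> homU K G 0"
      have "dU K c dG 0 \<omega> \<in> dU K c dG 0 ` homU K G 0" using a by blast
      then have "pairing K \<beta> (dU K c dG 0 \<omega>) = 1" using r unfolding Ann_def by blast
      then show "pairing K (dL K G c dG 1 \<beta>) \<omega> = pairing K oneL \<omega>" using D1[OF rL] a P_one by simp
    qed
    then show "\<beta> \<in> {\<beta> \<in> homL K G 1. dL K G c dG 1 \<beta> = oneL}" using rL by blast
  qed
qed

lemma D1_hom: "\<beta> \<in> homL K G 1 \<Longrightarrow> \<beta>' \<in> homL K G 1 \<Longrightarrow>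
   dL K G c dG 1 (mulL \<beta> \<beta>') = mulL (dL K G c dG 1 \<beta>) (dL K G c dG 1 \<beta>')"
proof -
  assume b: "\<beta> \<in> homL K G 1" "\<beta>' \<in> homL K G 1"
  have bb: "mulL \<beta> \<beta>' \<in> homL K G 1" using mulL_in[OF b] .
  show ?thesis
  proof (rule Phi_inj)
    show "dL K G c dG 1 (mulL \<beta> \<beta>') \<in> homL K G 0" using D1[OF bb] by blast
    show "mulL (dL K G c dG 1 \<beta>) (dL K G c dG 1 \<beta>') \<in> homL K G 0" using D1[OF b(1)] D1[OF b(2)] mulL_in by blast
    fix \<omega> assume "\<omega> \<in> homU K G 0"
    then show "pairing K (dL K G c dG 1 (mulL \<beta> \<beta>')) \<omega> = pairing K (mulL (dL K G c dG 1 \<beta>) (dL K G c dG 1 \<beta>')) \<omega>"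
      using D1[OF bb] D1[OF b(1)] D1[OF b(2)] by (simp add: P_mul)
  qed
qed

lemma imD1: "dL K G c dG 1 ` homL K G 1 = Ann 0 Zs"
proof -
  let ?D = "dL K G c dG 1"
  let ?d = "dU K c dG 0"
  have sub: "?D ` homL K G 1 \<subseteq> Ann 0 Zs"
  proof
    fix \<mu> assume "\<mu> \<in> ?D ` homL K G 1"
    then obtain \<beta> where b: "\<beta> \<in> homL K G 1" "\<mu> = ?D \<beta>" by blast
    have "pairing K \<mu> \<omega> = 1" if w: "\<omega> \<in> Zs" for \<omega>
      using w D1[OF b(1)] b(2) P_zero[OF b(1)] unfolding Zs_def by simp
    then show "\<mu> \<in> Ann 0 Zs" using D1[OF b(1)] b(2) unfolding Ann_def by blast
  qed
  have k1: "card (homL K G 1) = card (?D ` homL K G 1) * card {\<beta> \<in> homL K G 1. ?D \<beta> = oneL}"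
  proof (rule cgrp.kernel_card[OF cgrp_L cgrp_L])
    show "finite (homL K G 1)" using homL_card by blast
    show "cgrp.sub (homL K G 1) mulL invL oneL (homL K G 1)"
      unfolding cgrp.sub_def[OF cgrp_L] using oneL_in mulL_in invL_in by blast
    show "?D ` homL K G 1 \<subseteq> homL K G 0" using D1 by blast
    show "\<And>x y. x \<in> homL K G 1 \<Longrightarrow> y \<in> homL K G 1 \<Longrightarrow> ?D (mulL x y) = mulL (?D x) (?D y)"
      by (rule D1_hom)
  qed
  have aimg: "asub (?d ` homU K G 0)" by (rule asub_img[OF homU_asub]) (rule d0_add)
  have imgV1: "?d ` homU K G 0 \<subseteq> homU K G 1" using d0_in by blast
  have a1: "finite (Ann 1 (?d ` homU K G 0)) \<and> card (Ann 1 (?d ` homU K G 0)) * card (?d ` homU K G 0) = card (homU K G 1)"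
    using Ann_card[OF aimg imgV1] .
  have L1: "card (homL K G 1) = card (homU K G 1)" using homL_card by blast
  have kpos: "card (Ann 1 (?d ` homU K G 0)) > 0"
  proof -
    have "oneL \<in> Ann 1 (?d ` homU K G 0)" using Ann_sub[of 1] unfolding cgrp.sub_def[OF cgrp_L] by blast
    then show ?thesis using a1 card_gt_0_iff by blast
  qed
  have "card (?D ` homL K G 1) * card (Ann 1 (?d ` homU K G 0)) = card (homL K G 1)"
    using k1 unfolding kerD1 by simp
  also have "\<dots> = card (?d ` homU K G 0) * card (Ann 1 (?d ` homU K G 0))"
    using L1 a1 by (simp add: mult.commute)
  finally have e1: "card (?D ` homL K G 1) = card (?d ` homU K G 0)"
    using kpos by (simp add: mult_right_cancel)
  have k2: "card (homU K G 0) = card (?d ` homU K G 0) * card {x \<in> homU K G 0. ?d x = 0}"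
  proof (rule cgrp.kernel_card[OF cgrp_add cgrp_add])
    show "finite (homU K G 0)" by (rule homU_fin)
    show "cgrp.sub UNIV (+) uminus 0 (homU K G 0)" using homU_asub asub_sub by blast
    show "?d ` homU K G 0 \<subseteq> UNIV" by simp
    show "\<And>x y. x \<in> homU K G 0 \<Longrightarrow> y \<in> homU K G 0 \<Longrightarrow> ?d (x + y) = ?d x + ?d y" by (rule d0_add)
  qed
  have a2: "finite (Ann 0 Zs) \<and> card (Ann 0 Zs) * card Zs = card (homU K G 0)"
    using Ann_card[OF Zs_asub Zs_V0] .
  have "card (Ann 0 Zs) * card Zs = card (?d ` homU K G 0) * card Zs"
    using k2 a2 unfolding Zs_def by simp
  then have e2': "card (Ann 0 Zs) = card (?d ` homU K G 0)"
    using cardZ_pos by (simp add: mult_right_cancel)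
  then have e2: "card (?d ` homU K G 0) = card (Ann 0 Zs)" by simp
  show ?thesis using card_subset_eq[of "Ann 0 Zs" "?D ` homL K G 1"] a2 sub e1 e2 by simp
qed

lemma count_H0: "card (H0 K G c dG) * card Bs = card Zs"
proof -
  have H: "H0 K G c dG = (\<lambda>\<rho>. mulL \<rho> ` Ann 0 Zs) ` Ann 0 Bs"
    unfolding H0_def imD1 kerD0 ..
  have AZB: "Ann 0 Zs \<subseteq> Ann 0 Bs" using Bs_Zs unfolding Ann_def by blast
  have aB: "finite (Ann 0 Bs) \<and> card (Ann 0 Bs) * card Bs = card (homU K G 0)"
    using Ann_card[OF Bs_asub order_trans[OF Bs_Zs Zs_V0]] .
  have aZ: "finite (Ann 0 Zs) \<and> card (Ann 0 Zs) * card Zs = card (homU K G 0)"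
    using Ann_card[OF Zs_asub Zs_V0] .
  have cc: "card ((\<lambda>\<rho>. mulL \<rho> ` Ann 0 Zs) ` Ann 0 Bs) * card (Ann 0 Zs) = card (Ann 0 Bs)"
    by (rule cgrp.coset_card[OF cgrp_L[of 0]]) (use aB Ann_sub AZB in simp_all)
  have pos: "card (Ann 0 Zs) > 0"
  proof -
    have "oneL \<in> Ann 0 Zs" using Ann_sub[of 0] unfolding cgrp.sub_def[OF cgrp_L] by blast
    then show ?thesis using aZ card_gt_0_iff by blast
  qed
  have "card (H0 K G c dG) * card Bs * card (Ann 0 Zs) = card (H0 K G c dG) * card (Ann 0 Zs) * card Bs"
    by (simp add: mult.commute mult.left_commute)
  also have "\<dots> = card (Ann 0 Bs) * card Bs" using cc H by simp
  also have "\<dots> = card Zs * card (Ann 0 Zs)" using aB aZ by (simp add: mult.commute)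
  finally show ?thesis using pos by (simp add: mult_right_cancel)
qed

end


context dctx
begin

lemma card_L1_pos: "card (homL K G 1) > 0"
  using homL_card oneL_in card_gt_0_iff by blast

lemma sum_P: assumes v: "v \<in> homU K G 1"
  shows "(\<Sum>\<beta>\<in>homL K G 1. pairing K \<beta> v) = (if v = 0 then of_nat (card (homL K G 1)) else 0)"
proof -
  have "(\<Sum>\<beta>\<in>homL K G 1. pairing K \<beta> v) = (\<Sum>\<beta>\<in>homL K G 1. Phi K G 1 \<beta> v)"
    using v unfolding Phi_def by simp
  also have "\<dots> = (\<Sum>\<chi>\<in>{\<chi>. is_char (homU K G 1) \<chi>}. \<chi> v)"
    by (rule sum.reindex_bij_betw[OF Phi_bij, of "\<lambda>\<chi>. \<chi> v"])
  also have "\<dots> = (if v = 0 then of_nat (card {\<chi>. is_char (homU K G 1) \<chi>}) else 0)"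
    by (rule ORTH[OF homU_fin homU_asub v])
  also have "card {\<chi>. is_char (homU K G 1) \<chi>} = card (homL K G 1)"
    using bij_betw_same_card[OF Phi_bij] by simp
  finally show ?thesis .
qed

lemma B_form:
  assumes psi: "\<psi> \<in> Hspace K G"
  shows "Bop K G c dG \<psi> = (\<lambda>\<omega>. if \<omega> \<in> Zs then \<psi> \<omega> else 0)"
proof (intro ext)
  fix \<omega>
  have Bw: "Bop K G c dG \<psi> \<omega> = (\<Sum>\<beta>\<in>homL K G 1. pairing K (dL K G c dG 1 \<beta>) \<omega>) * \<psi> \<omega> / of_nat (card (homL K G 1))"
    unfolding Bop_def Qop_def by (simp add: sum_distrib_right)
  show "Bop K G c dG \<psi> \<omega> = (if \<omega> \<in> Zs then \<psi> \<omega> else 0)"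
  proof (cases "\<omega> \<in> homU K G 0")
    case False
    then have "\<psi> \<omega> = 0" using psi unfolding Hspace_def by blast
    then show ?thesis using Bw by simp
  next
    case True
    have "(\<Sum>\<beta>\<in>homL K G 1. pairing K (dL K G c dG 1 \<beta>) \<omega>) = (\<Sum>\<beta>\<in>homL K G 1. pairing K \<beta> (dU K c dG 0 \<omega>))"
      using D1 True by (intro sum.cong) auto
    also have "\<dots> = (if dU K c dG 0 \<omega> = 0 then of_nat (card (homL K G 1)) else 0)"
      by (rule sum_P[OF d0_in[OF True]])
    finally show ?thesis using Bw True card_L1_pos unfolding Zs_def by simp
  qed
qed

lemma card_Vm_pos: "card (homU K G (-1)) > 0"
  using homU_fin asubD(1)[OF homU_asub] card_gt_0_iff by blast

lemma A_form:
  "Aop K G c dG \<phi> \<omega> = (if \<omega> \<in> homU K G 0 then (\<Sum>\<alpha>\<in>homU K G (-1). \<phi> (\<omega> - dU K c dG (-1) \<alpha>)) else 0)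
      / of_nat (card (homU K G (-1)))"
proof -
  have e: "(\<lambda>n x. \<omega> n x - \<beta> n x) = \<omega> - \<beta>" for \<beta> :: "int \<Rightarrow> 'k \<Rightarrow> 'g" by (intro ext) simp
  show ?thesis unfolding Aop_def Pop_def e by (cases "\<omega> \<in> homU K G 0") simp_all
qed

lemma dm_diff: "a \<in> homU K G (-1) \<Longrightarrow> b \<in> homU K G (-1) \<Longrightarrow>
   dU K c dG (-1) (a - b) = dU K c dG (-1) a - dU K c dG (-1) b"
  by (rule hom_diff[OF homU_asub]) (rule dm_add)

lemma AB_out:
  assumes psi: "\<psi> \<in> Hspace K G" and w: "\<omega> \<notin> Zs"
  shows "Aop K G c dG (Bop K G c dG \<psi>) \<omega> = 0"
proof (cases "\<omega> \<in> homU K G 0")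
  case False then show ?thesis unfolding A_form by simp
next
  case True
  have "Bop K G c dG \<psi> (\<omega> - dU K c dG (-1) \<alpha>) = 0" if a: "\<alpha> \<in> homU K G (-1)" for \<alpha>
  proof -
    have bZ: "dU K c dG (-1) \<alpha> \<in> Zs" using a Bs_Zs unfolding Bs_def by blast
    have "\<omega> - dU K c dG (-1) \<alpha> \<notin> Zs"
    proof
      assume "\<omega> - dU K c dG (-1) \<alpha> \<in> Zs"
      then have "(\<omega> - dU K c dG (-1) \<alpha>) + dU K c dG (-1) \<alpha> \<in> Zs" using asubD(2)[OF Zs_asub] bZ by blast
      then show False using w by simp
    qed
    then show ?thesis unfolding B_form[OF psi] by simp
  qed
  then show ?thesis unfolding A_form by simp
qed

lemma bij_shift: assumes "asub A" "a0 \<in> A" shows "bij_betw (\<lambda>a. a - a0) A A"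
proof (rule bij_betw_imageI)
  show "inj_on (\<lambda>a. a - a0) A" by (rule inj_onI) simp
  show "(\<lambda>a. a - a0) ` A = A"
  proof
    show "(\<lambda>a. a - a0) ` A \<subseteq> A" using asubD(4)[OF assms(1) _ assms(2)] by blast
    show "A \<subseteq> (\<lambda>a. a - a0) ` A"
    proof
      fix b assume "b \<in> A"
      then have "b + a0 \<in> A" using asubD(2)[OF assms(1) _ assms(2)] by blast
      moreover have "b = (b + a0) - a0" by simp
      ultimately show "b \<in> (\<lambda>a. a - a0) ` A" by (rule rev_image_eqI)
    qed
  qed
qed

lemma AB_inv:
  assumes w: "\<omega> \<in> homU K G 0" and b: "b \<in> Bs"
  shows "Aop K G c dG \<phi> (\<omega> + b) = Aop K G c dG \<phi> \<omega>"
proof -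
  obtain \<alpha>0 where a0: "\<alpha>0 \<in> homU K G (-1)" "b = dU K c dG (-1) \<alpha>0" using b unfolding Bs_def by blast
  have wb: "\<omega> + b \<in> homU K G 0" using asubD(2)[OF homU_asub w] b Bs_Zs Zs_V0 by blast
  let ?g = "\<lambda>\<alpha>. \<phi> (\<omega> - dU K c dG (-1) \<alpha>)"
  have "(\<Sum>\<alpha>\<in>homU K G (-1). \<phi> (\<omega> + b - dU K c dG (-1) \<alpha>)) = (\<Sum>\<alpha>\<in>homU K G (-1). ?g (\<alpha> - \<alpha>0))"
  proof (rule sum.cong[OF refl])
    fix \<alpha> assume "\<alpha> \<in> homU K G (-1)"
    then have "dU K c dG (-1) (\<alpha> - \<alpha>0) = dU K c dG (-1) \<alpha> - b" using dm_diff a0 by simp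
    then have "\<omega> - dU K c dG (-1) (\<alpha> - \<alpha>0) = \<omega> + b - dU K c dG (-1) \<alpha>" by (simp add: algebra_simps)
    then show "\<phi> (\<omega> + b - dU K c dG (-1) \<alpha>) = ?g (\<alpha> - \<alpha>0)" by (simp only:)
  qed
  also have "\<dots> = (\<Sum>\<alpha>\<in>homU K G (-1). ?g \<alpha>)"
    by (rule sum.reindex_bij_betw[OF bij_shift[OF homU_asub a0(1)]])
  finally show ?thesis unfolding A_form using w wb by simp
qed

end


context dctx
begin

definition Cs where "Cs = (\<lambda>\<omega>. (+) \<omega> ` Bs) ` Zs"
definition ec :: "(int \<Rightarrow> 'k \<Rightarrow> 'g) set \<Rightarrow> (int \<Rightarrow> 'k \<Rightarrow> 'g) \<Rightarrow> complex" where
  "ec C = (\<lambda>\<omega>. if \<omega> \<in> C then 1 else 0)"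

lemma Cs_sub: "C \<in> Cs \<Longrightarrow> C \<subseteq> Zs"
  unfolding Cs_def using asubD(2)[OF Zs_asub] Bs_Zs by blast

lemma own: "(\<omega>::int \<Rightarrow> 'k \<Rightarrow> 'g) \<in> (+) \<omega> ` Bs"
proof -
  have "\<omega> = \<omega> + 0" by simp
  then show ?thesis using asubD(1)[OF Bs_asub] by blast
qed

lemma coset_eq: assumes "b \<in> Bs" shows "(+) (\<omega> + b) ` Bs = (+) \<omega> ` Bs"
proof
  show "(+) (\<omega> + b) ` Bs \<subseteq> (+) \<omega> ` Bs"
  proof
    fix x assume "x \<in> (+) (\<omega> + b) ` Bs"
    then obtain b' where b': "b' \<in> Bs" "x = \<omega> + b + b'" by blast
    then have bb: "b + b' \<in> Bs" using asubD(2)[OF Bs_asub] assms by blast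
    show "x \<in> (+) \<omega> ` Bs" by (rule rev_image_eqI[OF bb]) (simp add: b'(2) add.assoc)
  qed
  show "(+) \<omega> ` Bs \<subseteq> (+) (\<omega> + b) ` Bs"
  proof
    fix x assume "x \<in> (+) \<omega> ` Bs"
    then obtain b' where b': "b' \<in> Bs" "x = \<omega> + b'" by blast
    then have bb: "b' - b \<in> Bs" using asubD(4)[OF Bs_asub] assms by blast
    show "x \<in> (+) (\<omega> + b) ` Bs" by (rule rev_image_eqI[OF bb]) (simp add: b'(2))
  qed
qed

lemma coset_uniq: assumes "C \<in> Cs" "\<omega> \<in> C" shows "C = (+) \<omega> ` Bs"
proof -
  obtain \<omega>0 where "C = (+) \<omega>0 ` Bs" using assms(1) unfolding Cs_def by blast
  moreover then obtain b where "b \<in> Bs" "\<omega> = \<omega>0 + b" using assms(2) by blast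
  ultimately show ?thesis using coset_eq by simp
qed

lemma shift_in: assumes "C \<in> Cs" "b \<in> Bs" shows "\<omega> - b \<in> C \<longleftrightarrow> \<omega> \<in> C"
proof -
  obtain \<omega>0 where C: "C = (+) \<omega>0 ` Bs" using assms(1) unfolding Cs_def by blast
  show ?thesis
  proof
    assume "\<omega> - b \<in> C"
    then obtain b1 where "b1 \<in> Bs" "\<omega> - b = \<omega>0 + b1" using C by blast
    moreover then have "b1 + b \<in> Bs" using asubD(2)[OF Bs_asub] assms(2) by blast
    moreover have "\<omega> = \<omega>0 + (b1 + b)" using calculation(2) by (simp add: algebra_simps)
    ultimately show "\<omega> \<in> C" using C by blast
  next
    assume "\<omega> \<in> C"
    then obtain b1 where "b1 \<in> Bs" "\<omega> = \<omega>0 + b1" using C by blast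
    moreover then have "b1 - b \<in> Bs" using asubD(4)[OF Bs_asub] assms(2) by blast
    moreover have "\<omega> - b = \<omega>0 + (b1 - b)" using calculation(2) by (simp add: algebra_simps)
    ultimately show "\<omega> - b \<in> C" using C by blast
  qed
qed

lemma ec_H: "C \<in> Cs \<Longrightarrow> ec C \<in> Hspace K G"
  unfolding Hspace_def ec_def using Cs_sub Zs_V0 by auto

lemma ec_fix: assumes C: "C \<in> Cs" shows "Aop K G c dG (Bop K G c dG (ec C)) = ec C"
proof -
  have B: "Bop K G c dG (ec C) = ec C"
    unfolding B_form[OF ec_H[OF C]] using Cs_sub[OF C] by (intro ext) (auto simp: ec_def)
  show ?thesis
  proof (intro ext)
    fix \<omega>
    show "Aop K G c dG (Bop K G c dG (ec C)) \<omega> = ec C \<omega>"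
    proof (cases "\<omega> \<in> homU K G 0")
      case False
      then have "\<omega> \<notin> C" using Cs_sub[OF C] Zs_V0 by blast
      then show ?thesis unfolding A_form using False by (simp add: ec_def)
    next
      case True
      have "(\<Sum>\<alpha>\<in>homU K G (-1). ec C (\<omega> - dU K c dG (-1) \<alpha>)) = (\<Sum>\<alpha>\<in>homU K G (-1). ec C \<omega>)"
      proof (rule sum.cong[OF refl])
        fix \<alpha> assume "\<alpha> \<in> homU K G (-1)"
        then have "dU K c dG (-1) \<alpha> \<in> Bs" unfolding Bs_def by blast
        then show "ec C (\<omega> - dU K c dG (-1) \<alpha>) = ec C \<omega>" using shift_in[OF C] unfolding ec_def by simp
      qed
      then show ?thesis unfolding A_form B using True card_Vm_pos by simp
    qed
  qed
qed

lemma rep_in: assumes "C \<in> Cs" shows "(SOME \<omega>. \<omega> \<in> C) \<in> C"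
proof -
  obtain \<omega> where "C = (+) \<omega> ` Bs" using assms unfolding Cs_def by blast
  then have "\<omega> \<in> C" using own by simp
  then show ?thesis using someI[of "\<lambda>x. x \<in> C" \<omega>] by simp
qed

lemma ec_at: assumes "C \<in> Cs" "C' \<in> Cs" "\<omega> \<in> C'" shows "ec C \<omega> = (if C = C' then 1 else 0)"
proof (cases "\<omega> \<in> C")
  case True
  then have "C = C'" using coset_uniq[OF assms(1) True] coset_uniq[OF assms(2,3)] by simp
  then show ?thesis using True unfolding ec_def by simp
next
  case False then show ?thesis using assms(3) unfolding ec_def by auto
qed

lemma AB_expand:
  assumes psi: "\<psi> \<in> Hspace K G"
  defines "f \<equiv> Aop K G c dG (Bop K G c dG \<psi>)"
  shows "f = (\<Sum>C\<in>Cs. (\<lambda>\<omega>. f (SOME \<omega>. \<omega> \<in> C) * ec C \<omega>))"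
proof (intro ext)
  fix \<omega>
  have fin: "finite Cs" unfolding Cs_def using Zs_fin by simp
  show "f \<omega> = (\<Sum>C\<in>Cs. (\<lambda>\<omega>. f (SOME \<omega>. \<omega> \<in> C) * ec C \<omega>)) \<omega>"
  proof (cases "\<omega> \<in> Zs")
    case False
    have "ec C \<omega> = 0" if "C \<in> Cs" for C using Cs_sub[OF that] False unfolding ec_def by auto
    then show ?thesis unfolding fsum_apply using AB_out[OF psi False] f_def by simp
  next
    case True
    let ?C0 = "(+) \<omega> ` Bs"
    have C0: "?C0 \<in> Cs" using True unfolding Cs_def by blast
    have "(\<Sum>C\<in>Cs. f (SOME \<omega>. \<omega> \<in> C) * ec C \<omega>) = (\<Sum>C\<in>Cs. if C = ?C0 then f (SOME \<omega>. \<omega> \<in> C) else 0)"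
      by (rule sum.cong[OF refl]) (simp add: ec_at[OF _ C0 own])
    also have "\<dots> = f (SOME \<omega>'. \<omega>' \<in> ?C0)" using fin C0 by simp
    also have "\<dots> = f \<omega>"
    proof -
      obtain b where "b \<in> Bs" "(SOME \<omega>'. \<omega>' \<in> ?C0) = \<omega> + b" using rep_in[OF C0] by blast
      then show ?thesis unfolding f_def using AB_inv True Zs_V0 by auto
    qed
    finally show ?thesis unfolding fsum_apply by simp
  qed
qed

lemma main_dctx: "cdim (ground_space K G c dG) = card (H0 K G c dG)"
proof -
  interpret VS: vector_space "\<lambda>(a::complex) (f::(int \<Rightarrow> 'k \<Rightarrow> 'g) \<Rightarrow> complex) x. a * f x"
    by unfold_locales (simp_all add: fun_eq_iff algebra_simps)
  let ?E = "ec ` Cs"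
  have fin: "finite Cs" unfolding Cs_def using Zs_fin by simp
  have Egr: "?E \<subseteq> ground_space K G c dG"
    unfolding ground_space_def
  proof (rule image_subsetI)
    fix C assume C: "C \<in> Cs"
    show "ec C \<in> (\<lambda>\<psi>. Aop K G c dG (Bop K G c dG \<psi>)) ` Hspace K G"
      by (rule rev_image_eqI[OF ec_H[OF C]]) (simp add: ec_fix[OF C])
  qed
  have grE: "ground_space K G c dG \<subseteq> VS.span ?E"
  proof
    fix f assume "f \<in> ground_space K G c dG"
    then obtain \<psi> where psi: "\<psi> \<in> Hspace K G" "f = Aop K G c dG (Bop K G c dG \<psi>)"
      unfolding ground_space_def by blast
    have "f = (\<Sum>C\<in>Cs. (\<lambda>\<omega>. f (SOME \<omega>. \<omega> \<in> C) * ec C \<omega>))" using AB_expand[OF psi(1)] psi(2) by simp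
    also have "\<dots> \<in> VS.span ?E"
    proof (rule VS.span_sum)
      fix C assume "C \<in> Cs"
      then have "ec C \<in> VS.span ?E" by (intro VS.span_base) blast
      then show "(\<lambda>\<omega>. f (SOME \<omega>. \<omega> \<in> C) * ec C \<omega>) \<in> VS.span ?E" by (rule VS.span_scale)
    qed
    finally show "f \<in> VS.span ?E" .
  qed
  have ind: "\<not> VS.dependent ?E"
  proof
    assume "VS.dependent ?E"
    then obtain t u where tu: "finite t" "t \<subseteq> ?E" "(\<Sum>v\<in>t. (\<lambda>x. u v * v x)) = 0" "\<exists>v\<in>t. u v \<noteq> 0"
      unfolding VS.dependent_explicit by blast
    then obtain v0 where v0: "v0 \<in> t" "u v0 \<noteq> 0" by blast
    then obtain C0 where C0: "C0 \<in> Cs" "v0 = ec C0" using tu(2) by blast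
    let ?w = "SOME \<omega>. \<omega> \<in> C0"
    have w: "?w \<in> C0" by (rule rep_in[OF C0(1)])
    have "0 = (\<Sum>v\<in>t. (\<lambda>x. u v * v x)) ?w" using tu(3) by simp
    also have "\<dots> = (\<Sum>v\<in>t. u v * v ?w)" by (simp add: fsum_apply)
    also have "\<dots> = (\<Sum>v\<in>t. if v = v0 then u v else 0)"
    proof (rule sum.cong[OF refl])
      fix v assume "v \<in> t"
      then obtain C where C: "C \<in> Cs" "v = ec C" using tu(2) by blast
      have "v ?w = (if C = C0 then 1 else 0)" using ec_at[OF C(1) C0(1) w] C(2) by simp
      moreover have "C = C0 \<longleftrightarrow> v = v0"
      proof
        assume "v = v0"
        then have "ec C = ec C0" using C C0 by simp
        then have "ec C ?w = ec C0 ?w" by simp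
        then show "C = C0" using ec_at[OF C(1) C0(1) w] ec_at[OF C0(1) C0(1) w] by (auto split: if_splits)
      qed (use C C0 in simp)
      ultimately show "u v * v ?w = (if v = v0 then u v else 0)" by simp
    qed
    also have "\<dots> = u v0" using tu(1) v0(1) by simp
    finally show False using v0(2) by simp
  qed
  have inj: "inj_on ec Cs"
  proof (rule inj_onI)
    fix C C' assume h: "C \<in> Cs" "C' \<in> Cs" "ec C = ec C'"
    show "C = C'"
    proof -
      have "\<omega> \<in> C \<longleftrightarrow> \<omega> \<in> C'" for \<omega> using fun_cong[OF h(3), of \<omega>] unfolding ec_def by (auto split: if_splits)
      then show ?thesis by blast
    qed
  qed
  have cE: "card ?E = card Cs" using card_image[OF inj] .
  have dimE: "VS.dim (ground_space K G c dG) = card Cs"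
    by (rule VS.dim_unique[OF Egr grE ind cE])
  have cc: "card Cs * card Bs = card Zs"
    unfolding Cs_def
    by (rule cgrp.coset_card[OF cgrp_add]) (use Zs_fin Bs_asub Zs_asub Bs_Zs asub_sub in auto)
  have "card Cs * card Bs = card (H0 K G c dG) * card Bs" using cc count_H0 by simp
  then have "card Cs = card (H0 K G c dG)" using cardB_pos by simp
  then show ?thesis unfolding cdim_def using dimE by simp
qed

end


theorem mainTheorem6:
  fixes K :: "int \<Rightarrow> 'k set"
    and c :: "int \<Rightarrow> 'k \<Rightarrow> 'k \<Rightarrow> int"
    and G :: "int \<Rightarrow> 'g::ab_group_add set"
    and dG :: "int \<Rightarrow> 'g \<Rightarrow> 'g"
  assumes K_fin: "\<And>n. finite (K n)"
    and K_supp: "finite {n. K n \<noteq> {}}"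
    and C_complex: "\<And>n x z. x \<in> K n \<Longrightarrow> z \<in> K (n - 2) \<Longrightarrow>
                       (\<Sum>y\<in>K (n - 1). c n x y * c (n - 1) y z) = 0"
    and G_fin: "\<And>n. finite (G n)"
    and G_zero: "\<And>n. 0 \<in> G n"
    and G_add: "\<And>n a b. a \<in> G n \<Longrightarrow> b \<in> G n \<Longrightarrow> a + b \<in> G n"
    and G_neg: "\<And>n a. a \<in> G n \<Longrightarrow> - a \<in> G n"
    and dG_maps: "\<And>n a. a \<in> G n \<Longrightarrow> dG n a \<in> G (n - 1)"
    and dG_add: "\<And>n a b. a \<in> G n \<Longrightarrow> b \<in> G n \<Longrightarrow> dG n (a + b) = dG n a + dG n b"
    and G_complex: "\<And>n a. a \<in> G n \<Longrightarrow> dG (n - 1) (dG n a) = 0"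
  shows "cdim (ground_space K G c dG) = card (H0 K G c dG)"
  proof -
  have "dctx K G c dG"
    unfolding dctx_def dctx_axioms_def homctx_def
    using K_fin K_supp G_fin G_zero G_add G_neg C_complex dG_maps dG_add G_complex by blast
  then show ?thesis by (rule dctx.main_dctx)
qed

end
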